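(* Let $\Gamma$ be a connected amply regular graph with diameter $d=5$ and parameters $(v,k,\lambda,\mu)$, where $\mu=\frac{k-1}{2}$ and $k\ge5$ is odd. Then $\Gamma$ is the $5$-cube.
   Context: An amply regular graph with parameters $(v,k,\lambda,\mu)$ is a $k$-regular graph on $v$ vertices in which any two adjacent vertices have exactly $\lambda$ common neighbours and any two vertices at distance $2$ have exactly $\mu$ common neighbours. *)

theory Defs
  imports Main
begin

definition simple_graph :: "'a set \<Rightarrow> ('a \<Rightarrow> 'a \<Rightarrow> bool) \<Rightarrow> bool" where
  "simple_graph V E \<longleftrightarrow> finite V \<and> (\<forall>x y. E x y \<longrightarrow> x \<in> V \<and> y \<in> V)
     \<and> (\<forall>x y. E x y \<longrightarrow> E y x) \<and> (\<forall>x. \<not> E x x)"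

definition nbrs :: "'a set \<Rightarrow> ('a \<Rightarrow> 'a \<Rightarrow> bool) \<Rightarrow> 'a \<Rightarrow> 'a set" where
  "nbrs V E x = {y \<in> V. E x y}"

definition walk_of_length :: "'a set \<Rightarrow> ('a \<Rightarrow> 'a \<Rightarrow> bool) \<Rightarrow> 'a \<Rightarrow> 'a \<Rightarrow> nat \<Rightarrow> bool" where
  "walk_of_length V E x y n \<longleftrightarrow> (\<exists>p. length p = Suc n \<and> set p \<subseteq> V \<and> hd p = x \<and> last p = y
      \<and> (\<forall>i < n. E (p ! i) (p ! Suc i)))"

definition connected_graph :: "'a set \<Rightarrow> ('a \<Rightarrow> 'a \<Rightarrow> bool) \<Rightarrow> bool" where
  "connected_graph V E \<longleftrightarrow> V \<noteq> {} \<and> (\<forall>x\<in>V. \<forall>y\<in>V. \<exists>n. walk_of_length V E x y n)"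

definition gdist :: "'a set \<Rightarrow> ('a \<Rightarrow> 'a \<Rightarrow> bool) \<Rightarrow> 'a \<Rightarrow> 'a \<Rightarrow> nat" where
  "gdist V E x y = (LEAST n. walk_of_length V E x y n)"

definition diameter :: "'a set \<Rightarrow> ('a \<Rightarrow> 'a \<Rightarrow> bool) \<Rightarrow> nat" where
  "diameter V E = Max {gdist V E x y | x y. x \<in> V \<and> y \<in> V}"

definition amply_regular :: "'a set \<Rightarrow> ('a \<Rightarrow> 'a \<Rightarrow> bool) \<Rightarrow> nat \<Rightarrow> nat \<Rightarrow> nat \<Rightarrow> nat \<Rightarrow> bool" where
  "amply_regular V E v k lam mu \<longleftrightarrow> simple_graph V E \<and> card V = v
     \<and> (\<forall>x\<in>V. card (nbrs V E x) = k)
     \<and> (\<forall>x\<in>V. \<forall>y\<in>V. E x y \<longrightarrow> card (nbrs V E x \<inter> nbrs V E y) = lam)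
     \<and> (\<forall>x\<in>V. \<forall>y\<in>V. gdist V E x y = 2 \<longrightarrow> card (nbrs V E x \<inter> nbrs V E y) = mu)"

definition cube_vertices :: "nat \<Rightarrow> nat set set" where
  "cube_vertices n = Pow {..<n}"

definition cube_adj :: "nat set \<Rightarrow> nat set \<Rightarrow> bool" where
  "cube_adj A B \<longleftrightarrow> card ((A - B) \<union> (B - A)) = 1"

definition graph_iso_cube :: "'a set \<Rightarrow> ('a \<Rightarrow> 'a \<Rightarrow> bool) \<Rightarrow> nat \<Rightarrow> bool" where
  "graph_iso_cube V E n \<longleftrightarrow> (\<exists>f. bij_betw f V (cube_vertices n)
      \<and> (\<forall>x\<in>V. \<forall>y\<in>V. E x y \<longleftrightarrow> cube_adj (f x) (f y)))"

end

theory Submission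
  imports Defs
begin


locale ag =
  fixes V :: "'a set" and E :: "'a \<Rightarrow> 'a \<Rightarrow> bool" and k lam mu :: nat
  assumes sg: "simple_graph V E"
    and conn: "connected_graph V E"
    and deg: "\<forall>x\<in>V. card (nbrs V E x) = k"
    and lamA: "\<forall>x\<in>V. \<forall>y\<in>V. E x y \<longrightarrow> card (nbrs V E x \<inter> nbrs V E y) = lam"
    and muA: "\<forall>x\<in>V. \<forall>y\<in>V. gdist V E x y = 2 \<longrightarrow> card (nbrs V E x \<inter> nbrs V E y) = mu"
    and kmu: "k = 2 * mu + 1" and mu2: "mu \<ge> 2"
begin

abbreviation "Nb \<equiv> nbrs V E"
abbreviation "dd \<equiv> gdist V E"
abbreviation "W \<equiv> walk_of_length V E"

lemma finV: "finite V" using sg by (simp add: simple_graph_def)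
lemma EV1: "E x y \<Longrightarrow> x \<in> V" using sg by (simp add: simple_graph_def)
lemma EV2: "E x y \<Longrightarrow> y \<in> V" using sg by (simp add: simple_graph_def)
lemma Esym: "E x y \<Longrightarrow> E y x" using sg by (simp add: simple_graph_def)
lemma Eirr: "\<not> E x x" using sg by (simp add: simple_graph_def)
lemma Nb_iff: "y \<in> Nb x \<longleftrightarrow> E x y" using EV2 by (auto simp: nbrs_def)
lemma Nb_sub: "Nb x \<subseteq> V" by (auto simp: nbrs_def)
lemma finNb: "finite (Nb x)" using finV Nb_sub finite_subset by blast
lemma cardNb: "x \<in> V \<Longrightarrow> card (Nb x) = k" using deg by auto

lemma walk0: "x \<in> V \<Longrightarrow> W x x 0"
  unfolding walk_of_length_def by (rule exI[of _ "[x]"]) auto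

lemma walk0D: "W x y 0 \<Longrightarrow> x = y"
  unfolding walk_of_length_def by (auto simp: length_Suc_conv)

lemma walkV: "W x y n \<Longrightarrow> x \<in> V \<and> y \<in> V"
  unfolding walk_of_length_def
  by (metis hd_in_set last_in_set length_0_conv nat.distinct(1) subsetD)

lemma walk_snoc: assumes "W x y n" "E y y'" shows "W x y' (Suc n)"
proof -
  obtain p where p: "length p = Suc n" "set p \<subseteq> V" "hd p = x" "last p = y"
      "\<forall>i<n. E (p ! i) (p ! Suc i)"
    using assms(1) unfolding walk_of_length_def by blast
  have pne: "p \<noteq> []" using p(1) by auto
  show ?thesis unfolding walk_of_length_def
  proof (intro exI[of _ "p @ [y']"] conjI)
    show "length (p @ [y']) = Suc (Suc n)" using p by simp
    show "set (p @ [y']) \<subseteq> V" using p EV2[OF assms(2)] by auto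
    show "hd (p @ [y']) = x" using p pne by simp
    show "last (p @ [y']) = y'" by simp
    show "\<forall>i<Suc n. E ((p @ [y']) ! i) ((p @ [y']) ! Suc i)"
    proof (intro allI impI)
      fix i assume i: "i < Suc n"
      show "E ((p @ [y']) ! i) ((p @ [y']) ! Suc i)"
      proof (cases "i < n")
        case True
        then show ?thesis using p(1,5) by (simp add: nth_append)
      next
        case False
        then have "i = n" using i by simp
        moreover have "p ! n = y" using p(1,4) pne by (simp add: last_conv_nth)
        ultimately show ?thesis using p(1) assms(2) by (simp add: nth_append)
      qed
    qed
  qed
qed

lemma walk_unsnoc: assumes "W x y (Suc n)" shows "\<exists>y'. W x y' n \<and> E y' y"
proof -
  obtain p where p: "length p = Suc (Suc n)" "set p \<subseteq> V" "hd p = x" "last p = y"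
      "\<forall>i<Suc n. E (p ! i) (p ! Suc i)"
    using assms(1) unfolding walk_of_length_def by blast
  define q where "q = butlast p"
  have q1: "length q = Suc n" using p(1) by (simp add: q_def)
  have qne: "q \<noteq> []" using q1 by auto
  have qn: "\<And>i. i < Suc n \<Longrightarrow> q ! i = p ! i" using q1 by (simp add: q_def nth_butlast)
  have "W x (last q) n" unfolding walk_of_length_def
  proof (intro exI[of _ q] conjI)
    show "length q = Suc n" by fact
    show "set q \<subseteq> V" using p(2) by (metis in_set_butlastD q_def subset_code(1))
    have "p ! 0 = x" using p(3) p(1) by (metis hd_conv_nth list.size(3) nat.distinct(1))
    then show "hd q = x" using qn[of 0] qne by (simp add: hd_conv_nth)
    show "last q = last q" ..
    show "\<forall>i<n. E (q ! i) (q ! Suc i)" using p(5) qn by auto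
  qed
  moreover have "last q = p ! n" using qn[of n] q1 qne by (simp add: last_conv_nth)
  moreover have "p ! Suc n = y" using p(1,4) by (metis diff_Suc_1 last_conv_nth list.size(3) nat.distinct(1))
  ultimately show ?thesis using p(5) by auto
qed

lemma walk_rev: "W x y n \<Longrightarrow> W y x n"
proof (induction n arbitrary: y)
  case 0 then show ?case using walk0D walkV by blast
next
  case (Suc n)
  obtain y' where "W x y' n" "E y' y" using walk_unsnoc[OF Suc.prems] by blast
  have "W y' x n" using Suc.IH[OF \<open>W x y' n\<close>] .
  then obtain p where p: "length p = Suc n" "set p \<subseteq> V" "hd p = y'" "last p = x"
      "\<forall>i<n. E (p ! i) (p ! Suc i)" unfolding walk_of_length_def by blast
  have pne: "p \<noteq> []" using p(1) by auto
  show ?case unfolding walk_of_length_def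
  proof (intro exI[of _ "y # p"] conjI)
    show "length (y # p) = Suc (Suc n)" using p by simp
    show "set (y # p) \<subseteq> V" using p EV2[OF \<open>E y' y\<close>] by auto
    show "hd (y # p) = y" by simp
    show "last (y # p) = x" using p pne by simp
    show "\<forall>i<Suc n. E ((y # p) ! i) ((y # p) ! Suc i)"
    proof (intro allI impI)
      fix i assume "i < Suc n"
      then show "E ((y # p) ! i) ((y # p) ! Suc i)"
        using p(3,5) pne Esym[OF \<open>E y' y\<close>] by (cases i) (auto simp: hd_conv_nth)
    qed
  qed
qed

lemma conn_walk: "x \<in> V \<Longrightarrow> y \<in> V \<Longrightarrow> \<exists>n. W x y n"
  using conn by (auto simp: connected_graph_def)

lemma d_walk: "x \<in> V \<Longrightarrow> y \<in> V \<Longrightarrow> W x y (dd x y)"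
  unfolding gdist_def using conn_walk by (metis LeastI_ex)

lemma d_le: "W x y n \<Longrightarrow> dd x y \<le> n"
  unfolding gdist_def by (rule Least_le)

lemma d_sym: "dd x y = dd y x"
proof -
  have "W x y = W y x" by (intro ext iffI; erule walk_rev)
  then show ?thesis unfolding gdist_def by simp
qed

lemma d_0: "x \<in> V \<Longrightarrow> dd x x = 0" using d_le[OF walk0] by simp
lemma d_0D: "x \<in> V \<Longrightarrow> y \<in> V \<Longrightarrow> dd x y = 0 \<Longrightarrow> x = y"
  using d_walk walk0D by metis

lemma d_step: assumes "x \<in> V" "E y y'" shows "dd x y' \<le> dd x y + 1"
proof -
  have "W x y (dd x y)" using d_walk assms EV1 by blast
  then have "W x y' (Suc (dd x y))" using walk_snoc assms by blast
  then show ?thesis using d_le by fastforce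
qed

lemma d_adj: assumes "E x y" shows "dd x y = 1"
proof -
  have "dd x y \<le> 1" using d_step[OF EV1[OF assms] assms] d_0[OF EV1[OF assms]] by simp
  moreover have "dd x y \<noteq> 0" using d_0D EV1 EV2 assms Eirr by metis
  ultimately show ?thesis by simp
qed

lemma d_pred: assumes "x \<in> V" "y \<in> V" "dd x y = Suc n" shows "\<exists>y'. E y' y \<and> dd x y' = n"
proof -
  obtain y' where y': "W x y' n" "E y' y" using walk_unsnoc d_walk assms by metis
  have "dd x y' \<le> n" using d_le y' by blast
  moreover have "dd x y \<le> dd x y' + 1" using d_step[OF assms(1) y'(2)] .
  ultimately show ?thesis using y' assms by auto
qed

lemma d_1E: assumes "x \<in> V" "y \<in> V" "dd x y = 1" shows "E x y"
proof -
  obtain y' where "E y' y" "dd x y' = 0" using d_pred assms by (metis One_nat_def)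
  then show ?thesis using d_0D assms EV1 by metis
qed

lemma d_tri: assumes "x \<in> V" "y \<in> V" "z \<in> V" shows "dd x z \<le> dd x y + dd y z"
  using assms(3)
proof (induction "dd y z" arbitrary: z)
  case 0 then show ?case using d_0D assms by (metis add_0_right order_refl)
next
  case (Suc n)
  obtain z' where z': "E z' z" "dd y z' = n" using d_pred[OF assms(2) Suc.prems] Suc.hyps(2) by metis
  have "dd x z' \<le> dd x y + dd y z'" using Suc.hyps(1)[OF z'(2)[symmetric] EV1[OF z'(1)]] .
  moreover have "dd x z \<le> dd x z' + 1" using d_step[OF assms(1) z'(1)] .
  ultimately show ?case using z' Suc.hyps(2) by simp
qed

lemma d_adj_diff: assumes "x \<in> V" "E y y'" shows "dd x y \<le> dd x y' + 1" "dd x y' \<le> dd x y + 1"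
  using d_step[OF assms(1) Esym[OF assms(2)]] d_step[OF assms] by auto

lemma d2I: assumes "x \<in> V" "y \<in> V" "x \<noteq> y" "\<not> E x y" "E x w" "E w y" shows "dd x y = 2"
proof -
  have "dd x y \<le> 2" using d_step[OF assms(1) assms(6)] d_adj[OF assms(5)] by simp
  moreover have "dd x y \<noteq> 0" using d_0D assms by metis
  moreover have "dd x y \<noteq> 1" using d_1E assms by metis
  ultimately show ?thesis by simp
qed

lemma mu_card: "x \<in> V \<Longrightarrow> y \<in> V \<Longrightarrow> dd x y = 2 \<Longrightarrow> card (Nb x \<inter> Nb y) = mu"
  using muA by blast

lemma lam_card: "E x y \<Longrightarrow> card (Nb x \<inter> Nb y) = lam"
  using lamA EV1 EV2 by blast


lemma fin_int: "finite (Nb x \<inter> A)" using finNb by (rule finite_Int[OF disjI1])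

lemma no_big_lam:
  assumes xV: "x \<in> V" and c: "c \<in> V" "dd x c = 2" and w: "E x w" "E w c"
  shows "lam < k - 2"
proof (rule ccontr)
  assume "\<not> lam < k - 2"
  then have L: "lam \<ge> k - 2" by simp
  have wV: "w \<in> V" using EV2 w by blast
  have cx: "c \<notin> Nb x"
  proof
    assume "c \<in> Nb x" then have "E x c" using Nb_iff by blast
    then have "dd x c = 1" by (rule d_adj)
    with c(2) show False by simp
  qed
  have xx: "x \<notin> Nb x" using Nb_iff Eirr by auto
  have cc: "c \<notin> Nb c" using Nb_iff Eirr by auto
  have xc: "x \<notin> Nb c" using cx Nb_iff Esym by auto
  have sub1: "Nb w \<inter> Nb x \<subseteq> Nb w - {x, c}" using cx xx by blast
  have sub2: "Nb w \<inter> Nb c \<subseteq> Nb w - {x, c}" using xc cc by blast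
  have xw: "x \<in> Nb w" "c \<in> Nb w" using w Nb_iff Esym by auto
  have xnc: "x \<noteq> c" using c(2) d_0[OF xV] by auto
  have cd: "card (Nb w - {x, c}) = k - 2"
  proof -
    have "{x, c} \<subseteq> Nb w" using xw by blast
    then have "card (Nb w - {x, c}) = card (Nb w) - card {x, c}" using finNb card_Diff_subset by (metis finite_subset)
    then show ?thesis using xnc cardNb[OF wV] by simp
  qed
  have e1: "Nb w \<inter> Nb x = Nb w - {x, c}"
  proof (rule card_seteq)
    show "finite (Nb w - {x, c})" using finNb by simp
    show "card (Nb w - {x, c}) \<le> card (Nb w \<inter> Nb x)" using cd L lam_card[of w x] Esym w by simp
  qed (rule sub1)
  have e2: "Nb w \<inter> Nb c = Nb w - {x, c}"
  proof (rule card_seteq)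
    show "finite (Nb w - {x, c})" using finNb by simp
    show "card (Nb w - {x, c}) \<le> card (Nb w \<inter> Nb c)" using cd L lam_card[of w c] w by simp
  qed (rule sub2)
  have "w \<in> Nb x" "w \<in> Nb c" using w Esym Nb_iff by auto
  then have "insert w (Nb w - {x, c}) \<subseteq> Nb x \<inter> Nb c" using e1 e2 by blast
  then have "card (insert w (Nb w - {x, c})) \<le> card (Nb x \<inter> Nb c)" by (intro card_mono fin_int)
  then have "card (insert w (Nb w - {x, c})) \<le> mu" using mu_card[OF xV c] by simp
  moreover have "w \<notin> Nb w" using Nb_iff Eirr by auto
  ultimately have "k - 2 + 1 \<le> mu" using cd finNb by simp
  then show False using kmu mu2 by simp
qed

lemma lemA:
  assumes xV: "x \<in> V" and yV: "y \<in> V" and d3: "dd x y = 3"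
  shows "card (Nb y \<inter> {w \<in> V. dd x w = 2}) \<ge> mu + 1"
proof -
  define S where "S = Nb y \<inter> {w \<in> V. dd x w = 2}"
  have finS: "finite S" unfolding S_def using fin_int by simp
  obtain c where c: "E c y" "dd x c = 2" using d_pred[OF xV yV] d3 by (metis numeral_3_eq_3 numeral_2_eq_2)
  have cV: "c \<in> V" using EV1 c by blast
  have key: "\<And>w. E x w \<Longrightarrow> E w c \<Longrightarrow> dd w y = 2 \<and> Nb w \<inter> Nb y \<subseteq> S"
  proof -
    fix w assume w: "E x w" "E w c"
    have wV: "w \<in> V" using EV2 w by blast
    have "dd w y \<le> 2" using d_step[OF wV c(1)] d_adj[OF w(2)] by simp
    moreover have "dd x y \<le> dd x w + dd w y" using d_tri xV wV yV by blast
    ultimately have 1: "dd w y = 2" using d_adj[OF w(1)] d3 by simp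
    have "Nb w \<inter> Nb y \<subseteq> S"
    proof
      fix t assume t: "t \<in> Nb w \<inter> Nb y"
      have tV: "t \<in> V" using t Nb_sub by blast
      have "dd x t \<le> 2" using d_step[OF xV, of w t] t Nb_iff d_adj[OF w(1)] by simp
      moreover have "dd x y \<le> dd x t + 1" using d_step[OF xV, of t y] t Nb_iff Esym by auto
      ultimately show "t \<in> S" unfolding S_def using t tV d3 by auto
    qed
    then show "dd w y = 2 \<and> Nb w \<inter> Nb y \<subseteq> S" using 1 by blast
  qed
  define Q where "Q = Nb x \<inter> Nb c"
  have cQ: "card Q = mu" unfolding Q_def using mu_card[OF xV cV c(2)] .
  obtain w0 where w0: "w0 \<in> Q" using cQ mu2 by (metis card.empty equals0I not_numeral_le_zero)
  have w0': "E x w0" "E w0 c" using w0 unfolding Q_def using Nb_iff Esym by auto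
  have w0V: "w0 \<in> V" using EV2 w0' by blast
  have geS: "mu \<le> card S"
    using key[OF w0'] mu_card[OF w0V yV] finS by (metis card_mono)
  show ?thesis
  proof (rule ccontr)
    assume "\<not> ?thesis"
    then have cS: "card S = mu" using geS unfolding S_def by simp
    have eqS: "\<And>w. w \<in> Q \<Longrightarrow> S \<subseteq> Nb w"
    proof -
      fix w assume "w \<in> Q"
      then have w: "E x w" "E w c" unfolding Q_def using Nb_iff Esym by auto
      have wV: "w \<in> V" using EV2 w by blast
      have "Nb w \<inter> Nb y = S"
        by (rule card_seteq[OF finS]) (use key[OF w] mu_card[OF wV yV] cS in auto)
      then show "S \<subseteq> Nb w" by blast
    qed
    have xS: "x \<notin> S" unfolding S_def using d_0[OF xV] by auto
    have QS: "Q \<inter> S = {}"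
    proof -
      have "\<And>t. t \<in> Q \<Longrightarrow> t \<notin> S"
      proof -
        fix t assume "t \<in> Q" then have "E x t" unfolding Q_def using Nb_iff by auto
        then have "dd x t = 1" by (rule d_adj)
        then show "t \<notin> S" unfolding S_def by auto
      qed
      then show ?thesis by blast
    qed
    have xQ: "x \<notin> Q" unfolding Q_def using Nb_iff Eirr by auto
    have finQ: "finite Q" unfolding Q_def using fin_int by simp
    have adjQ: "\<And>w1 w2. w1 \<in> Q \<Longrightarrow> w2 \<in> Q \<Longrightarrow> w1 \<noteq> w2 \<Longrightarrow> E w1 w2"
    proof (rule ccontr)
      fix w1 w2 assume a: "w1 \<in> Q" "w2 \<in> Q" "w1 \<noteq> w2" "\<not> E w1 w2"
      have e: "E x w1" "E x w2" using a unfolding Q_def using Nb_iff by auto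
      have V12: "w1 \<in> V" "w2 \<in> V" using e EV2 by auto
      have "dd w1 w2 = 2" using d2I[OF V12 a(3,4) Esym[OF e(1)] e(2)] .
      then have "card (Nb w1 \<inter> Nb w2) = mu" using mu_card V12 by blast
      moreover have "x \<in> Nb w1" "x \<in> Nb w2" using e Nb_iff Esym by auto
      then have "insert x S \<subseteq> Nb w1 \<inter> Nb w2" using eqS a by blast
      ultimately have "card (insert x S) \<le> mu" using card_mono[OF fin_int] by metis
      then show False using xS finS cS by simp
    qed
    obtain w1 w2 where w12: "w1 \<in> Q" "w2 \<in> Q" "w1 \<noteq> w2"
    proof -
      have "card (Q - {w0}) \<ge> 1" using cQ w0 mu2 finQ by (simp add: card_Diff_singleton)
      then obtain w1 where "w1 \<in> Q - {w0}" by (metis card.empty ex_in_conv not_one_le_zero)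
      then show ?thesis using that w0 by blast
    qed
    have sub: "insert x (S \<union> (Q - {w1, w2})) \<subseteq> Nb w1 \<inter> Nb w2"
    proof -
      have "E x w1" "E x w2" using w12 unfolding Q_def using Nb_iff by auto
      then have "x \<in> Nb w1" "x \<in> Nb w2" using Nb_iff Esym by auto
      moreover have "Q - {w1, w2} \<subseteq> Nb w1 \<inter> Nb w2"
      proof
        fix t assume "t \<in> Q - {w1, w2}"
        then have "E w1 t" "E w2 t" using adjQ w12 by auto
        then show "t \<in> Nb w1 \<inter> Nb w2" using Nb_iff by auto
      qed
      ultimately show ?thesis using eqS w12 by blast
    qed
    have cQ2: "card (Q - {w1, w2}) = mu - 2" using w12 cQ finQ by (simp add: card_Diff_subset)
    have u: "card (S \<union> (Q - {w1, w2})) = card S + card (Q - {w1, w2})"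
      by (rule card_Un_disjoint) (use finS finQ QS in auto)
    have "card (insert x (S \<union> (Q - {w1, w2}))) = 1 + mu + (mu - 2)"
      using xS xQ finS finQ cS cQ2 u by simp
    moreover have "card (Nb w1 \<inter> Nb w2) = lam" using lam_card adjQ w12 by metis
    ultimately have "1 + mu + (mu - 2) \<le> lam" using sub card_mono[OF fin_int] by metis
    then have "lam \<ge> k - 2" using kmu mu2 by simp
    moreover have "lam < k - 2" using no_big_lam[OF xV cV c(2) w0'] .
    ultimately show False by simp
  qed
qed

end



context ag begin

lemma Nb_mem: "y \<in> Nb x \<longleftrightarrow> E x y" by (rule Nb_iff)

lemma common_le_mu:
  assumes lm: "lam < mu" and a: "a \<in> V" "b \<in> V" "a \<noteq> b"
  shows "card (Nb a \<inter> Nb b) \<le> mu"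
proof (cases "E a b")
  case True then show ?thesis using lam_card lm by simp
next
  case False
  show ?thesis
  proof (cases "Nb a \<inter> Nb b = {}")
    case True then show ?thesis by simp
  next
    case False
    then obtain w where "w \<in> Nb a" "w \<in> Nb b" by blast
    then have "E a w" "E w b" using Nb_mem Esym by auto
    then have "dd a b = 2" using d2I a \<open>\<not> E a b\<close> by blast
    then show ?thesis using mu_card a by simp
  qed
qed

end

locale ap = ag +
  fixes x z
  assumes xV: "x \<in> V" and zV: "z \<in> V" and dxz: "dd x z = 5"
begin

definition "N2 = {y \<in> V. dd x y = 2 \<and> dd y z = 3}"
definition "N3 = {u \<in> V. dd x u = 3 \<and> dd u z = 2}"
definition "M y = Nb x \<inter> Nb y"
definition "U y = Nb y \<inter> N3"
definition "C u = Nb u \<inter> N2"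
definition "A u = {w \<in> Nb x. \<exists>t\<in>C u. E w t}"

lemma tri5: "v \<in> V \<Longrightarrow> 5 \<le> dd x v + dd v z"
  using d_tri[OF xV _ zV] dxz by metis

lemma swap: "ap V E k lam mu z x"
  unfolding ap_def ap_axioms_def using ag_axioms xV zV dxz d_sym[of z x] by simp

lemma finM: "finite (M y)" unfolding M_def using fin_int .
lemma finU: "finite (U y)" unfolding U_def using fin_int .
lemma finC: "finite (C y)" unfolding C_def using fin_int .

lemma N2_ex: "\<exists>y. y \<in> N2"
proof -
  have "dd x z = Suc 4" using dxz by simp
  then obtain a where a: "E a z" "dd x a = 4" using d_pred[OF xV zV] by blast
  have aV: "a \<in> V" using a EV1 by blast
  have "dd x a = Suc 3" using a by simp
  then obtain b where b: "E b a" "dd x b = 3" using d_pred[OF xV aV] by blast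
  have bV: "b \<in> V" using b EV1 by blast
  have "dd x b = Suc 2" using b by simp
  then obtain c where c: "E c b" "dd x c = 2" using d_pred[OF xV bV] by blast
  have cV: "c \<in> V" using c EV1 by blast
  have "dd z a = 1" using d_adj Esym a by blast
  then have "dd z b \<le> 2" using d_step[OF zV Esym[OF b(1)]] by simp
  then have "dd z c \<le> 3" using d_step[OF zV Esym[OF c(1)]] by simp
  then have "dd c z \<le> 3" using d_sym by metis
  moreover have "5 \<le> dd x c + dd c z" using tri5 cV by blast
  ultimately have "c \<in> N2" unfolding N2_def using c cV by simp
  then show ?thesis by blast
qed

lemma T2:
  assumes y: "y \<in> N2"
  shows "card (M y) = mu" "card (U y) = mu + 1" "Nb y = M y \<union> U y"
proof -
  have yV: "y \<in> V" and dy: "dd x y = 2" "dd y z = 3" using y unfolding N2_def by auto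
  show cM: "card (M y) = mu" unfolding M_def using mu_card[OF xV yV dy(1)] .
  define Cz where "Cz = Nb y \<inter> {w \<in> V. dd z w = 2}"
  have "dd z y = 3" using dy d_sym by metis
  then have cCz: "card Cz \<ge> mu + 1" unfolding Cz_def using lemA[OF zV yV] by blast
  have CzU: "Cz \<subseteq> U y"
  proof
    fix w assume w: "w \<in> Cz"
    then have wV: "w \<in> V" and ew: "E y w" and dw: "dd z w = 2" unfolding Cz_def using Nb_mem by auto
    have "dd x w \<le> 3" using d_step[OF xV ew] dy by simp
    moreover have "5 \<le> dd x w + dd w z" using tri5 wV by blast
    moreover have "dd w z = 2" using dw d_sym by metis
    ultimately have "w \<in> N3" unfolding N3_def using wV by simp
    then show "w \<in> U y" unfolding U_def using w Cz_def by blast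
  qed
  have disj: "M y \<inter> U y = {}"
  proof -
    have "\<And>w. w \<in> M y \<Longrightarrow> w \<notin> U y"
    proof -
      fix w assume "w \<in> M y" then have "E x w" unfolding M_def using Nb_mem by auto
      then have "dd x w = 1" by (rule d_adj)
      then show "w \<notin> U y" unfolding U_def N3_def by auto
    qed
    then show ?thesis by blast
  qed
  have sub: "M y \<union> U y \<subseteq> Nb y" unfolding M_def U_def by blast
  have cU: "card (M y \<union> U y) = card (M y) + card (U y)" using card_Un_disjoint[OF finM finU disj] .
  have le: "card (M y \<union> U y) \<le> k" using card_mono[OF finNb sub] cardNb[OF yV] by simp
  have "card Cz \<le> card (U y)" using card_mono[OF finU CzU] .
  then show cU1: "card (U y) = mu + 1" using cCz cU le cM kmu by simp
  show "Nb y = M y \<union> U y"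
  proof (rule card_seteq[symmetric])
    show "finite (Nb y)" by (rule finNb)
    show "card (Nb y) \<le> card (M y \<union> U y)" using cU cM cU1 cardNb[OF yV] kmu by simp
  qed (rule sub)
qed

lemma T3:
  assumes u: "u \<in> N3"
  shows "card (C u) = mu + 1" "Nb u = (Nb z \<inter> Nb u) \<union> C u"
proof -
  interpret s: ap V E k lam mu z x by (rule swap)
  have e2: "s.N2 = N3" unfolding s.N2_def N3_def using d_sym by metis
  have e3: "s.N3 = N2" unfolding s.N3_def N2_def using d_sym by metis
  have uu: "u \<in> s.N2" using u e2 by simp
  have "s.U u = C u" unfolding s.U_def C_def e3 ..
  moreover have "s.M u = Nb z \<inter> Nb u" unfolding s.M_def ..
  ultimately show "card (C u) = mu + 1" "Nb u = (Nb z \<inter> Nb u) \<union> C u" using s.T2[OF uu] by auto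
qed

lemma N2_V: "y \<in> N2 \<Longrightarrow> y \<in> V" unfolding N2_def by auto
lemma N3_V: "y \<in> N3 \<Longrightarrow> y \<in> V" unfolding N3_def by auto

lemma lam_lt: "lam < mu"
proof -
  obtain y where y: "y \<in> N2" using N2_ex by blast
  have "M y \<noteq> {}" using T2(1)[OF y] mu2 by auto
  then obtain m where m: "m \<in> M y" by blast
  have em: "E y m" "E x m" using m unfolding M_def using Nb_mem by auto
  have sub: "Nb m \<inter> Nb y \<subseteq> M y - {m}"
  proof
    fix t assume t: "t \<in> Nb m \<inter> Nb y"
    have "t \<noteq> m" using t Nb_mem Eirr by auto
    moreover have "t \<notin> U y"
    proof
      assume "t \<in> U y"
      then have "dd x t = 3" unfolding U_def N3_def by auto
      moreover have "dd x t \<le> dd x m + 1" using d_step[OF xV, of m t] t Nb_mem by auto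
      moreover have "dd x m = 1" using d_adj em by blast
      ultimately show False by simp
    qed
    ultimately show "t \<in> M y - {m}" using t T2(3)[OF y] by blast
  qed
  have "lam = card (Nb m \<inter> Nb y)" using lam_card Esym em by metis
  also have "\<dots> \<le> card (M y - {m})" using card_mono sub finM by (metis finite_Diff)
  also have "\<dots> < mu" using T2(1)[OF y] m finM mu2 by simp
  finally show ?thesis .
qed

lemma cle: "a \<in> V \<Longrightarrow> b \<in> V \<Longrightarrow> a \<noteq> b \<Longrightarrow> card (Nb a \<inter> Nb b) \<le> mu"
  using common_le_mu lam_lt by blast

lemma cle_contr:
  assumes "a \<in> V" "b \<in> V" "a \<noteq> b" "S \<subseteq> Nb a \<inter> Nb b" "card S > mu"
  shows False
proof -
  have "card S \<le> card (Nb a \<inter> Nb b)" using card_mono[OF fin_int assms(4)] .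
  then show False using cle[OF assms(1-3)] assms(5) by simp
qed

lemma G5:
  assumes u: "u \<in> N3" and w: "E x w" and t: "t \<in> C u" "E w t"
  shows "dd w u = 2" "Nb w \<inter> Nb u = Nb w \<inter> C u" "card (Nb w \<inter> C u) = mu"
proof -
  have wV: "w \<in> V" using w EV2 by blast
  have uV: "u \<in> V" using u N3_V by blast
  have du: "dd x u = 3" "dd u z = 2" using u unfolding N3_def by auto
  have dw: "dd x w = 1" using d_adj w by blast
  have tu: "E u t" using t unfolding C_def using Nb_mem by auto
  have nwu: "w \<noteq> u" using du dw by auto
  have nE: "\<not> E w u"
  proof
    assume "E w u" then have "dd x u \<le> dd x w + 1" using d_step[OF xV] by blast
    then show False using du dw by simp
  qed
  show d2: "dd w u = 2" using d2I[OF wV uV nwu nE t(2) Esym[OF tu]] .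
  have sub: "Nb w \<inter> Nb u \<subseteq> C u"
  proof
    fix s assume s: "s \<in> Nb w \<inter> Nb u"
    then have sV: "s \<in> V" and ws: "E w s" and us: "E u s" using Nb_mem Nb_sub by auto
    have "dd x s \<le> 2" using d_step[OF xV ws] dw by simp
    moreover have "dd x u \<le> dd x s + 1" using d_step[OF xV Esym[OF us]] .
    moreover have "dd z s \<le> dd z u + 1" using d_step[OF zV us] .
    moreover have "5 \<le> dd x s + dd s z" using tri5 sV by blast
    moreover have "dd z u = dd u z" "dd z s = dd s z" using d_sym by auto
    ultimately have "dd x s = 2" "dd s z = 3" using du by auto
    then show "s \<in> C u" unfolding C_def N2_def using s sV by auto
  qed
  show e: "Nb w \<inter> Nb u = Nb w \<inter> C u" using sub unfolding C_def by blast
  show "card (Nb w \<inter> C u) = mu" using mu_card[OF wV uV d2] e by simp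
qed

definition "miss u w = the_elem (C u - Nb w)"

lemma miss:
  assumes u: "u \<in> N3" and w: "E x w" and t: "t \<in> C u" "E w t"
  shows "C u - Nb w = {miss u w}" "miss u w \<in> C u" "\<not> E w (miss u w)"
    "\<And>s. s \<in> C u \<Longrightarrow> s \<noteq> miss u w \<Longrightarrow> E w s"
proof -
  have "card (C u - Nb w) = card (C u) - card (C u \<inter> Nb w)"
    using card_Diff_subset_Int finC by (metis Diff_Int2 Diff_Int_distrib2 card_Diff_subset finite_Int inf.cobounded1 inf.idem)
  also have "\<dots> = 1" using T3(1)[OF u] G5(3)[OF assms] by (simp add: Int_commute)
  finally have "card (C u - Nb w) = 1" .
  then show e: "C u - Nb w = {miss u w}" unfolding miss_def by (metis card_1_singletonE the_elem_eq)
  then show "miss u w \<in> C u" "\<not> E w (miss u w)" using Nb_mem by auto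
  show "\<And>s. s \<in> C u \<Longrightarrow> s \<noteq> miss u w \<Longrightarrow> E w s" using e Nb_mem by (metis Diff_iff singletonD)
qed

lemma C_N2: "t \<in> C u \<Longrightarrow> t \<in> N2" unfolding C_def by auto
lemma C_E: "t \<in> C u \<Longrightarrow> E u t" unfolding C_def using Nb_mem by auto
lemma M_E: "m \<in> M y \<Longrightarrow> E x m \<and> E y m" unfolding M_def using Nb_mem by auto
lemma M_I: "E x m \<Longrightarrow> E y m \<Longrightarrow> m \<in> M y" unfolding M_def using Nb_mem by auto
lemma U_N3: "u \<in> U y \<Longrightarrow> u \<in> N3" unfolding U_def by auto
lemma U_C: "y \<in> N2 \<Longrightarrow> u \<in> U y \<Longrightarrow> y \<in> C u"
  unfolding U_def C_def using Nb_mem Esym by auto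
lemma x_notC: "x \<notin> C u" unfolding C_def N2_def using d_0[OF xV] by auto
lemma x_notN2: "x \<notin> N2" unfolding N2_def using d_0[OF xV] by auto

lemma sig:
  assumes y: "y \<in> N2" and u: "u \<in> U y"
  shows "\<And>m. m \<in> M y \<Longrightarrow> miss u m \<in> C u \<and> miss u m \<noteq> y \<and> \<not> E m (miss u m)"
    and "inj_on (miss u) (M y)"
    and "miss u ` M y = C u - {y}"
    and "\<And>m m'. m \<in> M y \<Longrightarrow> m' \<in> M y \<Longrightarrow> m' \<noteq> m \<Longrightarrow> E m' (miss u m)"
proof -
  have u3: "u \<in> N3" using U_N3 u .
  have yC: "y \<in> C u" using U_C y u .
  have H: "\<And>m. m \<in> M y \<Longrightarrow> C u - Nb m = {miss u m} \<and> miss u m \<in> C u \<and> \<not> E m (miss u m)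
      \<and> (\<forall>s. s \<in> C u \<longrightarrow> s \<noteq> miss u m \<longrightarrow> E m s)"
  proof -
    fix m assume m: "m \<in> M y"
    have "E x m" "E m y" using M_E[OF m] Esym by auto
    then show "?thesis m" using miss[OF u3 _ yC] by blast
  qed
  show A: "\<And>m. m \<in> M y \<Longrightarrow> miss u m \<in> C u \<and> miss u m \<noteq> y \<and> \<not> E m (miss u m)"
  proof -
    fix m assume m: "m \<in> M y"
    have "E m y" using M_E[OF m] Esym by auto
    then show "miss u m \<in> C u \<and> miss u m \<noteq> y \<and> \<not> E m (miss u m)" using H[OF m] by metis
  qed
  show inj: "inj_on (miss u) (M y)"
  proof (rule inj_onI, rule ccontr)
    fix m1 m2 assume m: "m1 \<in> M y" "m2 \<in> M y" "miss u m1 = miss u m2" "m1 \<noteq> m2"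
    define t where "t = miss u m1"
    have sub: "insert x (C u - {t}) \<subseteq> Nb m1 \<inter> Nb m2"
    proof -
      have "x \<in> Nb m1" "x \<in> Nb m2" using M_E m(1,2) Esym Nb_mem by auto
      moreover have "C u - {t} \<subseteq> Nb m1 \<inter> Nb m2" using H[OF m(1)] H[OF m(2)] m(3) t_def Nb_mem by auto
      ultimately show ?thesis by blast
    qed
    have "t \<in> C u" using A[OF m(1)] t_def by simp
    then have "card (insert x (C u - {t})) = mu + 1" using T3(1)[OF u3] x_notC finC by simp
    moreover have "m1 \<in> V" "m2 \<in> V" using M_E m EV2 by blast+
    ultimately show False using cle_contr[OF _ _ m(4) sub] by simp
  qed
  show img: "miss u ` M y = C u - {y}"
  proof (rule card_seteq)
    show "finite (C u - {y})" using finC by simp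
    show "miss u ` M y \<subseteq> C u - {y}" using A by blast
    show "card (C u - {y}) \<le> card (miss u ` M y)"
      using card_image[OF inj] T2(1)[OF y] T3(1)[OF u3] yC finC by simp
  qed
  show "\<And>m m'. m \<in> M y \<Longrightarrow> m' \<in> M y \<Longrightarrow> m' \<noteq> m \<Longrightarrow> E m' (miss u m)"
  proof -
    fix m m' assume mm: "m \<in> M y" "m' \<in> M y" "m' \<noteq> m"
    have "miss u m \<noteq> miss u m'" using inj mm unfolding inj_on_def by metis
    then show "E m' (miss u m)" using H[OF mm(2)] A[OF mm(1)] by blast
  qed
qed

lemma Hlem:
  assumes y: "y \<in> N2" and u: "u \<in> U y" and w: "E x w" "w \<notin> M y" and t: "t \<in> C u" "E w t"
  shows "C u - {y} \<subseteq> Nb w"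
proof -
  have u3: "u \<in> N3" using U_N3 u .
  have yC: "y \<in> C u" using U_C y u .
  have c: "card (Nb w \<inter> C u) = mu" using G5(3)[OF u3 w(1) t] .
  have nwy: "\<not> E w y" using w M_I Esym by blast
  have sub: "Nb w \<inter> C u \<subseteq> C u - {y}" using nwy Nb_mem by auto
  have "Nb w \<inter> C u = C u - {y}"
  proof (rule card_seteq[OF _ sub])
    show "finite (C u - {y})" using finC by simp
    show "card (C u - {y}) \<le> card (Nb w \<inter> C u)" using c T3(1)[OF u3] yC finC by simp
  qed
  then show ?thesis by blast
qed

lemma G8:
  assumes y: "y \<in> N2" and u: "u \<in> U y"
  shows "\<exists>e. E x e \<and> e \<notin> M y \<and> A u = insert e (M y) \<and> (\<forall>m\<in>M y. M (miss u m) = insert e (M y - {m}))"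
proof -
  have u3: "u \<in> N3" using U_N3 u .
  have yC: "y \<in> C u" using U_C y u .
  have "M y \<noteq> {}" using T2(1)[OF y] mu2 by auto
  then obtain m0 where m0: "m0 \<in> M y" by blast
  define t0 where "t0 = miss u m0"
  have t0: "t0 \<in> C u" "t0 \<noteq> y" "\<not> E m0 t0" using sig(1)[OF y u m0] t0_def by auto
  have t02: "t0 \<in> N2" using C_N2 t0 by blast
  have int: "M t0 \<inter> M y = M y - {m0}"
  proof
    show "M t0 \<inter> M y \<subseteq> M y - {m0}" using t0(3) M_E Esym by blast
    show "M y - {m0} \<subseteq> M t0 \<inter> M y"
    proof
      fix m assume m: "m \<in> M y - {m0}"
      then have "E m t0" using sig(4)[OF y u m0] t0_def by auto
      then show "m \<in> M t0 \<inter> M y" using m M_I M_E Esym by blast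
    qed
  qed
  have "card (M t0) = card (M t0 \<inter> M y) + card (M t0 - M y)"
    using card_Int_Diff[OF finM] by blast
  moreover have "card (M t0 \<inter> M y) = mu - 1" using int T2(1)[OF y] m0 finM by simp
  ultimately have "card (M t0 - M y) = 1" using T2(1)[OF t02] mu2 by simp
  then obtain e where e: "M t0 - M y = {e}" using card_1_singletonE by blast
  have ex: "E x e" "e \<notin> M y" "E t0 e" using e M_E by blast+
  have eall: "C u - {y} \<subseteq> Nb e" using Hlem[OF y u ex(1,2) t0(1) Esym[OF ex(3)]] .
  have Mm: "\<forall>m\<in>M y. M (miss u m) = insert e (M y - {m})"
  proof
    fix m assume m: "m \<in> M y"
    define s where "s = miss u m"
    have s: "s \<in> C u" "s \<noteq> y" "\<not> E m s" using sig(1)[OF y u m] s_def by auto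
    have s2: "s \<in> N2" using C_N2 s by blast
    have "E e s" using eall s Nb_mem by blast
    then have "e \<in> M s" using M_I ex Esym by blast
    moreover have "M y - {m} \<subseteq> M s"
    proof
      fix m' assume m': "m' \<in> M y - {m}"
      then have "E m' s" using sig(4)[OF y u m] s_def by auto
      then show "m' \<in> M s" using m' M_I M_E Esym by blast
    qed
    ultimately have sub: "insert e (M y - {m}) \<subseteq> M s" by blast
    have "card (insert e (M y - {m})) = mu" using ex(2) T2(1)[OF y] m finM mu2 by simp
    then show "M s = insert e (M y - {m})"
      using card_seteq[OF finM sub] T2(1)[OF s2] by simp
  qed
  have Au: "A u = insert e (M y)"
  proof
    show "insert e (M y) \<subseteq> A u"
    proof
      fix w assume "w \<in> insert e (M y)"
      then show "w \<in> A u"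
      proof
        assume "w = e" then show ?thesis unfolding A_def using ex t0 Nb_mem Esym by blast
      next
        assume "w \<in> M y" then show ?thesis unfolding A_def using M_E yC Nb_mem Esym by blast
      qed
    qed
    show "A u \<subseteq> insert e (M y)"
    proof
      fix w assume w: "w \<in> A u"
      then obtain t where t: "E x w" "t \<in> C u" "E w t" unfolding A_def using Nb_mem by auto
      show "w \<in> insert e (M y)"
      proof (cases "w \<in> M y")
        case False
        have "C u - {y} \<subseteq> Nb w" using Hlem[OF y u t(1) False t(2,3)] .
        then have "E w t0" using t0 Nb_mem by blast
        then have "w \<in> M t0" using M_I t(1) Esym by blast
        then show ?thesis using e False by blast
      qed simp
    qed
  qed
  show ?thesis using ex Au Mm by blast
qed

lemma G9:
  assumes y: "y1 \<in> N2" "y2 \<in> N2" and eq: "M y1 = M y2"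
  shows "y1 = y2"
proof (rule ccontr)
  assume ne: "y1 \<noteq> y2"
  have "U y1 \<noteq> {}" using T2(2)[OF y(1)] by auto
  then obtain u where u: "u \<in> U y1" by blast
  have u3: "u \<in> N3" using U_N3 u .
  have yC: "y1 \<in> C u" using U_C y(1) u .
  have "card (M y1) \<ge> 2" using T2(1)[OF y(1)] mu2 by simp
  then obtain m1 m2 where m: "m1 \<in> M y1" "m2 \<in> M y1" "m1 \<noteq> m2"
    by (metis One_nat_def card_le_Suc0_iff_eq not_less_eq_eq numeral_2_eq_2 finM)
  define s1 s2 where "s1 = miss u m1" and "s2 = miss u m2"
  have s: "s1 \<in> C u" "s2 \<in> C u" "s1 \<noteq> s2"
    using sig(1)[OF y(1) u] sig(2)[OF y(1) u] m s1_def s2_def unfolding inj_on_def by blast+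
  have y2C: "y2 \<notin> C u"
  proof
    assume "y2 \<in> C u"
    then have "y2 \<in> miss u ` M y1" using sig(3)[OF y(1) u] ne by blast
    then obtain m where "m \<in> M y1" "y2 = miss u m" by blast
    moreover have "E m y2" using M_E eq \<open>m \<in> M y1\<close> Esym by blast
    ultimately show False using sig(1)[OF y(1) u] by blast
  qed
  have sub: "insert x (insert y2 (C u - {s1, s2})) \<subseteq> Nb m1 \<inter> Nb m2"
  proof -
    have "x \<in> Nb m1" "x \<in> Nb m2" "y2 \<in> Nb m1" "y2 \<in> Nb m2"
      using M_E m eq Esym Nb_mem by auto
    moreover have "C u - {s1, s2} \<subseteq> Nb m1 \<inter> Nb m2"
    proof
      fix t assume t: "t \<in> C u - {s1, s2}"
      have "C u - Nb m1 = {s1}" "C u - Nb m2 = {s2}"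
        using miss(1)[OF u3 _ yC] M_E m Esym s1_def s2_def by blast+
      then show "t \<in> Nb m1 \<inter> Nb m2" using t by blast
    qed
    ultimately show ?thesis by blast
  qed
  have "card (C u - {s1, s2}) = mu - 1" using s T3(1)[OF u3] finC by (simp add: card_Diff_subset)
  moreover have "x \<noteq> y2" using x_notN2 y by blast
  ultimately have "card (insert x (insert y2 (C u - {s1, s2}))) = mu + 1"
    using x_notC y2C finC mu2 by simp
  moreover have "m1 \<in> V" "m2 \<in> V" using M_E m EV2 by blast+
  ultimately show False using cle_contr[OF _ _ m(3) sub] by simp
qed

definition "eu u y = (SOME e. E x e \<and> e \<notin> M y \<and> A u = insert e (M y) \<and> (\<forall>m\<in>M y. M (miss u m) = insert e (M y - {m})))"

lemma eu:
  assumes y: "y \<in> N2" and u: "u \<in> U y"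
  shows "E x (eu u y)" "eu u y \<notin> M y" "A u = insert (eu u y) (M y)"
    "\<And>m. m \<in> M y \<Longrightarrow> M (miss u m) = insert (eu u y) (M y - {m})"
  using someI_ex[OF G8[OF y u]] unfolding eu_def by blast+

lemma G10:
  assumes y: "y \<in> N2" and u: "u1 \<in> U y" "u2 \<in> U y" and eq: "eu u1 y = eu u2 y"
  shows "u1 = u2"
proof (rule ccontr)
  assume ne: "u1 \<noteq> u2"
  have u3: "u1 \<in> N3" "u2 \<in> N3" using U_N3 u by auto
  have sub: "C u1 \<subseteq> Nb u1 \<inter> Nb u2"
  proof
    fix t assume t: "t \<in> C u1"
    have "E u2 t"
    proof (cases "t = y")
      case True then show ?thesis using U_C[OF y u(2)] C_E by blast
    next
      case False
      then have "t \<in> miss u1 ` M y" using sig(3)[OF y u(1)] t by blast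
      then obtain m where m: "m \<in> M y" "t = miss u1 m" by blast
      have "M t = M (miss u2 m)" using eu(4)[OF y u(1) m(1)] eu(4)[OF y u(2) m(1)] eq m(2) by simp
      moreover have "t \<in> N2" using C_N2 t by blast
      moreover have "miss u2 m \<in> C u2" using sig(1)[OF y u(2) m(1)] by blast
      ultimately have "t = miss u2 m" using G9 C_N2 by blast
      then show ?thesis using C_E \<open>miss u2 m \<in> C u2\<close> by blast
    qed
    then show "t \<in> Nb u1 \<inter> Nb u2" using t C_E Nb_mem by blast
  qed
  moreover have "card (C u1) > mu" using T3(1)[OF u3(1)] by simp
  moreover have "u1 \<in> V" "u2 \<in> V" using u3 N3_V by blast+
  ultimately show False using cle_contr ne by blast
qed

lemma surj_eu:
  assumes y: "y \<in> N2" and w: "E x w" "w \<notin> M y"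
  shows "\<exists>u\<in>U y. w = eu u y"
proof -
  have inj: "inj_on (\<lambda>u. eu u y) (U y)" using G10[OF y] by (meson inj_onI)
  have sub: "(\<lambda>u. eu u y) ` U y \<subseteq> Nb x - M y" using eu(1,2)[OF y] Nb_mem by blast
  have cM: "card (Nb x - M y) = mu + 1"
  proof -
    have "M y \<subseteq> Nb x" unfolding M_def by blast
    then have "card (Nb x - M y) = card (Nb x) - card (M y)" using card_Diff_subset finM by blast
    then show ?thesis using cardNb[OF xV] T2(1)[OF y] kmu by simp
  qed
  have "(\<lambda>u. eu u y) ` U y = Nb x - M y"
  proof (rule card_seteq[OF _ sub])
    show "finite (Nb x - M y)" using finNb by simp
    show "card (Nb x - M y) \<le> card ((\<lambda>u. eu u y) ` U y)" using card_image[OF inj] T2(2)[OF y] cM by simp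
  qed
  moreover have "w \<in> Nb x - M y" using w Nb_mem by blast
  ultimately show ?thesis by blast
qed

lemma inM:
  assumes w: "E x w" shows "\<exists>y\<in>N2. w \<in> M y"
proof -
  obtain y where y: "y \<in> N2" using N2_ex by blast
  show ?thesis
  proof (cases "w \<in> M y")
    case False
    obtain u where u: "u \<in> U y" "w = eu u y" using surj_eu[OF y w False] by blast
    have "M y \<noteq> {}" using T2(1)[OF y] mu2 by auto
    then obtain m where m: "m \<in> M y" by blast
    have "w \<in> M (miss u m)" using eu(4)[OF y u(1) m] u(2) by simp
    moreover have "miss u m \<in> N2" using sig(1)[OF y u(1) m] C_N2 by blast
    ultimately show ?thesis by blast
  qed (use y in blast)
qed

lemma K2: assumes "E x w" shows "dd w z = 4"
proof -
  obtain y where y: "y \<in> N2" "w \<in> M y" using inM[OF assms] by blast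
  have "dd z w \<le> dd z y + 1" using d_step[OF zV] M_E y(2) by blast
  moreover have "dd z y = 3" using y N2_def d_sym by auto
  moreover have "5 \<le> dd x w + dd w z" using tri5 EV2 assms by blast
  moreover have "dd x w = 1" using d_adj assms by blast
  moreover have "dd z w = dd w z" by (rule d_sym)
  ultimately show ?thesis by linarith
qed

lemma G12:
  assumes v: "E x v"
  shows "mu = 2" "\<And>t. E v t \<Longrightarrow> t \<noteq> x \<Longrightarrow> t \<in> N2"
proof -
  obtain y0 where y0: "y0 \<in> N2" "v \<in> M y0" using inM[OF v] by blast
  define P where "P = U y0 \<times> (M y0 - {v})"
  define Y where "Y = (\<lambda>(u, a). miss u a) ` P"
  have YN: "Y \<subseteq> Nb v \<inter> N2"
  proof
    fix t assume "t \<in> Y"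
    then obtain u a where ua: "u \<in> U y0" "a \<in> M y0" "a \<noteq> v" "t = miss u a"
      unfolding Y_def P_def by auto
    have "E v t" using sig(4)[OF y0(1) ua(1) ua(2) y0(2)] ua by auto
    moreover have "t \<in> N2" using sig(1)[OF y0(1) ua(1) ua(2)] C_N2 ua by blast
    ultimately show "t \<in> Nb v \<inter> N2" using Nb_mem by blast
  qed
  have inj: "inj_on (\<lambda>(u, a). miss u a) P"
  proof (rule inj_onI)
    fix p q assume p: "p \<in> P" and q: "q \<in> P" and eq: "(\<lambda>(u, a). miss u a) p = (\<lambda>(u, a). miss u a) q"
    obtain u a where pu: "p = (u, a)" "u \<in> U y0" "a \<in> M y0" using p unfolding P_def by auto
    obtain u' a' where qu: "q = (u', a')" "u' \<in> U y0" "a' \<in> M y0" using q unfolding P_def by auto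
    have "M (miss u a) = M (miss u' a')" using eq pu qu by simp
    then have e: "insert (eu u y0) (M y0 - {a}) = insert (eu u' y0) (M y0 - {a'})"
      using eu(4)[OF y0(1) pu(2,3)] eu(4)[OF y0(1) qu(2,3)] by simp
    have n1: "eu u y0 \<notin> M y0" "eu u' y0 \<notin> M y0" using eu(2)[OF y0(1)] pu qu by auto
    have "eu u y0 = eu u' y0" using e n1 by blast
    then have "u = u'" using G10[OF y0(1) pu(2) qu(2)] by simp
    moreover have "a = a'"
    proof (rule ccontr)
      assume "a \<noteq> a'"
      then have "a \<in> insert (eu u' y0) (M y0 - {a'})" using pu by blast
      then have "a \<in> insert (eu u y0) (M y0 - {a})" using e by simp
      then show False using n1 pu by blast
    qed
    ultimately show "p = q" using pu qu by simp
  qed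
  have cP: "card P = (mu + 1) * (mu - 1)"
    unfolding P_def using T2(1,2)[OF y0(1)] y0(2) finM by (simp add: card_cartesian_product)
  have finP: "finite P" unfolding P_def using finU finM by simp
  have cY: "card Y = (mu + 1) * (mu - 1)" unfolding Y_def using card_image[OF inj] cP by simp
  have finY: "finite Y" unfolding Y_def using finP by simp
  have y0Y: "y0 \<notin> Y"
  proof
    assume "y0 \<in> Y"
    then obtain u a where ua: "u \<in> U y0" "a \<in> M y0" "y0 = miss u a" unfolding Y_def P_def by auto
    then show False using sig(1)[OF y0(1) ua(1) ua(2)] by simp
  qed
  have xY: "x \<notin> Y" using YN x_notN2 by blast
  have xy0: "x \<noteq> y0" using x_notN2 y0 by blast
  define Z where "Z = insert x (insert y0 Y)"
  have cZ: "card Z = (mu + 1) * (mu - 1) + 2" unfolding Z_def using cY finY y0Y xY xy0 by simp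
  have ZN: "Z \<subseteq> Nb v"
  proof -
    have "x \<in> Nb v" "y0 \<in> Nb v" using v Esym y0 M_E Nb_mem by auto
    then show ?thesis unfolding Z_def using YN by blast
  qed
  have vV: "v \<in> V" using v EV2 by blast
  have "card Z \<le> k" using card_mono[OF finNb ZN] cardNb[OF vV] by simp
  then have le: "(mu + 1) * (mu - 1) + 2 \<le> 2 * mu + 1" using cZ kmu by linarith
  have "3 * (mu - 1) \<le> (mu + 1) * (mu - 1)" using mu2 by (intro mult_right_mono) auto
  then show m2: "mu = 2" using le mu2 by linarith
  have "Z = Nb v"
  proof (rule card_seteq[OF finNb ZN])
    show "card (Nb v) \<le> card Z" using cZ cardNb[OF vV] kmu m2 by simp
  qed
  then show "\<And>t. E v t \<Longrightarrow> t \<noteq> x \<Longrightarrow> t \<in> N2" unfolding Z_def using YN y0 Nb_mem by blast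
qed

end



context ap begin

definition "Cx v = {t \<in> Nb v. dd x t + 1 = dd x v}"

lemma muis2: "mu = 2"
proof -
  obtain y where "y \<in> N2" using N2_ex by blast
  then have "card (M y) = mu" by (rule T2(1))
  then have "M y \<noteq> {}" using mu2 by auto
  then obtain m where "m \<in> M y" by blast
  then show ?thesis using G12(1) M_E by blast
qed

lemma kis5: "k = 5" using kmu muis2 by simp

lemma lowC:
  assumes vV: "v \<in> V" and I: "dd x v + dd v z = 5"
  shows "dd x v \<le> card (Cx v)"
proof -
  interpret s: ap V E k lam mu z x by (rule swap)
  have finCx: "finite (Cx v)" unfolding Cx_def using finNb by simp
  consider "dd x v = 0" | "dd x v = 1" | "dd x v = 2" | "dd x v = 3" | "dd x v = 4" | "dd x v = 5"
    using I by linarith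
  then show ?thesis
  proof cases
    case 1 then show ?thesis by simp
  next
    case 2
    then have "E x v" using d_1E xV vV by blast
    then have "x \<in> Cx v" unfolding Cx_def using Nb_mem Esym d_0[OF xV] 2 by auto
    then have "card {x} \<le> card (Cx v)" using card_mono[OF finCx] by blast
    then show ?thesis using 2 by simp
  next
    case 3
    have "Nb x \<inter> Nb v \<subseteq> Cx v"
    proof
      fix t assume "t \<in> Nb x \<inter> Nb v"
      then have "E x t" "t \<in> Nb v" using Nb_mem by auto
      then show "t \<in> Cx v" unfolding Cx_def using d_adj 3 by auto
    qed
    then have "card (Nb x \<inter> Nb v) \<le> card (Cx v)" using card_mono[OF finCx] by blast
    then show ?thesis using mu_card[OF xV vV 3] muis2 3 by simp
  next
    case 4
    have "Nb v \<inter> {w \<in> V. dd x w = 2} \<subseteq> Cx v" unfolding Cx_def using 4 by auto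
    then have "card (Nb v \<inter> {w \<in> V. dd x w = 2}) \<le> card (Cx v)" using card_mono[OF finCx] by blast
    then show ?thesis using lemA[OF xV vV 4] muis2 4 by simp
  next
    case 5
    then have "dd v z = 1" using I by simp
    then have "dd z v = 1" using d_sym[of v z] by simp
    then have ezv: "E z v" using d_1E zV vV by blast
    have "Nb v - {z} \<subseteq> Cx v"
    proof
      fix t assume t: "t \<in> Nb v - {z}"
      then have "E v t" "t \<noteq> z" using Nb_mem by auto
      then have "t \<in> s.N2" using s.G12(2)[OF ezv] by blast
      then have "dd x t = 3" unfolding s.N2_def using d_sym[of t x] by simp
      then show "t \<in> Cx v" unfolding Cx_def using t 5 by auto
    qed
    moreover have "card (Nb v - {z}) = 4" using cardNb[OF vV] kis5 ezv Esym Nb_mem finNb by simp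
    ultimately show ?thesis using card_mono[OF finCx, of "Nb v - {z}"] 5 by simp
  next
    case 6
    then have "dd v z = 0" using I by simp
    then have vz: "v = z" using d_0D vV zV by blast
    have "Nb z \<subseteq> Cx v"
    proof
      fix t assume t: "t \<in> Nb z"
      then have "E z t" using Nb_mem by auto
      then have "dd t x = 4" using s.K2 by blast
      then show "t \<in> Cx v" unfolding Cx_def using t 6 vz d_sym[of t x] by simp
    qed
    then have "card (Nb z) \<le> card (Cx v)" using card_mono[OF finCx] by blast
    then show ?thesis using cardNb[OF zV] kis5 6 by simp
  qed
qed

lemma layer:
  assumes vV: "v \<in> V" and I: "dd x v + dd v z = 5"
  shows "card (Cx v) = dd x v"
    "\<And>t. E v t \<Longrightarrow> dd x t + dd t z = 5 \<and> (dd x t + 1 = dd x v \<or> dd x t = dd x v + 1)"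
proof -
  interpret s: ap V E k lam mu z x by (rule swap)
  have I': "dd z v + dd v x = 5" using I d_sym[of v x] d_sym[of v z] by simp
  have l1: "dd x v \<le> card (Cx v)" using lowC[OF vV I] .
  have l2: "dd z v \<le> card (s.Cx v)" using s.lowC[OF vV I'] .
  have finCx: "finite (Cx v)" unfolding Cx_def using finNb by simp
  have finCz: "finite (s.Cx v)" unfolding s.Cx_def using finNb by simp
  have disj: "Cx v \<inter> s.Cx v = {}"
  proof -
    have "\<And>t. t \<in> Cx v \<Longrightarrow> t \<in> s.Cx v \<Longrightarrow> False"
    proof -
      fix t assume "t \<in> Cx v" "t \<in> s.Cx v"
      then have t: "t \<in> V" "dd x t + 1 = dd x v" "dd z t + 1 = dd z v"
        unfolding Cx_def s.Cx_def using Nb_sub by auto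
      have "5 \<le> dd x t + dd t z" using tri5 t(1) by blast
      then show False using t I d_sym[of t z] d_sym[of v z] by simp
    qed
    then show ?thesis by blast
  qed
  have sub: "Cx v \<union> s.Cx v \<subseteq> Nb v" unfolding Cx_def s.Cx_def by blast
  have cu: "card (Cx v \<union> s.Cx v) = card (Cx v) + card (s.Cx v)" using card_Un_disjoint[OF finCx finCz disj] .
  have "card (Cx v \<union> s.Cx v) \<le> 5" using card_mono[OF finNb sub] cardNb[OF vV] kis5 by simp
  then show cx: "card (Cx v) = dd x v" using cu l1 l2 I d_sym[of v z] by simp
  have "card (Cx v \<union> s.Cx v) = 5" using cu l1 l2 I d_sym[of v z] \<open>card (Cx v \<union> s.Cx v) \<le> 5\<close> by simp
  then have eqN: "Cx v \<union> s.Cx v = Nb v" using card_seteq[OF finNb sub] cardNb[OF vV] kis5 by simp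
  show "\<And>t. E v t \<Longrightarrow> dd x t + dd t z = 5 \<and> (dd x t + 1 = dd x v \<or> dd x t = dd x v + 1)"
  proof -
    fix t assume "E v t"
    then have tN: "t \<in> Nb v" and tV: "t \<in> V" using Nb_mem EV2 by auto
    have T: "5 \<le> dd x t + dd t z" using tri5 tV by blast
    have s1: "dd x t \<le> dd x v + 1" "dd x v \<le> dd x t + 1" using d_adj_diff[OF xV \<open>E v t\<close>] by auto
    have s2: "dd z t \<le> dd z v + 1" "dd z v \<le> dd z t + 1" using d_adj_diff[OF zV \<open>E v t\<close>] by auto
    have sy: "dd z t = dd t z" "dd z v = dd v z" using d_sym by auto
    from tN eqN have "t \<in> Cx v \<or> t \<in> s.Cx v" by blast
    then show "dd x t + dd t z = 5 \<and> (dd x t + 1 = dd x v \<or> dd x t = dd x v + 1)"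
    proof
      assume "t \<in> Cx v"
      then have "dd x t + 1 = dd x v" unfolding Cx_def by auto
      then show ?thesis using T s2 sy I by simp
    next
      assume "t \<in> s.Cx v"
      then have "dd z t + 1 = dd z v" unfolding s.Cx_def by auto
      then show ?thesis using T s1 sy I by simp
    qed
  qed
qed

lemma all_I: "v \<in> V \<Longrightarrow> dd x v + dd v z = 5"
proof -
  have "\<And>n v. W x v n \<Longrightarrow> dd x v + dd v z = 5"
  proof -
    fix n v show "W x v n \<Longrightarrow> dd x v + dd v z = 5"
    proof (induction n arbitrary: v)
      case 0 then have "v = x" using walk0D by metis
      then show ?case using d_0[OF xV] dxz by simp
    next
      case (Suc n)
      obtain v' where v': "W x v' n" "E v' v" using walk_unsnoc[OF Suc.prems] by blast
      have "dd x v' + dd v' z = 5" using Suc.IH[OF v'(1)] .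
      then show ?case using layer(2)[OF EV1[OF v'(2)] _ v'(2)] by blast
    qed
  qed
  then show "v \<in> V \<Longrightarrow> dd x v + dd v z = 5" using conn_walk[OF xV] by blast
qed

lemma F1: "E v t \<Longrightarrow> dd x t + 1 = dd x v \<or> dd x t = dd x v + 1"
  using layer(2) all_I EV1 by blast

lemma F2: "v \<in> V \<Longrightarrow> card (Cx v) = dd x v"
  using layer(1) all_I by blast

end



context ap begin

lemma Cx_D: "t \<in> Cx v \<Longrightarrow> t \<in> V \<and> E v t \<and> dd x t + 1 = dd x v"
  unfolding Cx_def using Nb_mem Nb_sub by auto

lemma Cx_I: "E v t \<Longrightarrow> dd x t + 1 = dd x v \<Longrightarrow> t \<in> Cx v"
  unfolding Cx_def using Nb_mem by auto

lemma finCx: "finite (Cx v)" unfolding Cx_def using finNb by simp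

lemma cle2: "a \<in> V \<Longrightarrow> b \<in> V \<Longrightarrow> a \<noteq> b \<Longrightarrow> S \<subseteq> Nb a \<inter> Nb b \<Longrightarrow> card S \<ge> 3 \<Longrightarrow> False"
  using cle_contr muis2 by (metis Suc_le_eq numeral_2_eq_2 numeral_3_eq_3)

lemma Sq:
  assumes vV: "v \<in> V" and c: "c1 \<in> Cx v" "c2 \<in> Cx v" "c1 \<noteq> c2"
  shows "\<exists>s. s \<in> Cx c1 \<and> s \<in> Cx c2"
proof -
  have c1: "c1 \<in> V" "E v c1" "dd x c1 + 1 = dd x v" using Cx_D c(1) by auto
  have c2: "c2 \<in> V" "E v c2" "dd x c2 + 1 = dd x v" using Cx_D c(2) by auto
  define P where "P s c \<longleftrightarrow> c \<in> Cx v \<and> c \<noteq> c1 \<and> E s c" for s c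
  have ex: "\<And>s. s \<in> Cx c1 \<Longrightarrow> \<exists>c. P s c"
  proof -
    fix s assume s: "s \<in> Cx c1"
    have s': "s \<in> V" "E c1 s" "dd x s + 1 = dd x c1" using Cx_D s by auto
    have nsv: "s \<noteq> v" using s' c1 by auto
    have nE: "\<not> E s v" using F1[of s v] s' c1 by auto
    have "dd s v = 2" using d2I[OF s'(1) vV nsv nE Esym[OF s'(2)] Esym[OF c1(2)]] .
    then have "card (Nb s \<inter> Nb v) = 2" using mu_card[OF s'(1) vV] muis2 by simp
    moreover have "c1 \<in> Nb s \<inter> Nb v" using s' c1 Esym Nb_mem by auto
    ultimately have "card ((Nb s \<inter> Nb v) - {c1}) = 1" using fin_int by simp
    then obtain c where "c \<in> (Nb s \<inter> Nb v) - {c1}" by (metis card_1_singletonE singletonI)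
    then have cc: "E s c" "E v c" "c \<noteq> c1" using Nb_mem by auto
    have "dd x c + 1 = dd x v \<or> dd x c = dd x v + 1" using F1[OF cc(2)] .
    moreover have "dd x c + 1 = dd x s \<or> dd x c = dd x s + 1" using F1[OF cc(1)] .
    ultimately have "dd x c + 1 = dd x v" using s' c1 by auto
    then show "\<exists>c. P s c" unfolding P_def using cc Cx_I by blast
  qed
  define phi where "phi s = (SOME c. P s c)" for s
  have phi: "\<And>s. s \<in> Cx c1 \<Longrightarrow> P s (phi s)" unfolding phi_def using ex someI_ex by metis
  have inj: "inj_on phi (Cx c1)"
  proof (rule inj_onI, rule ccontr)
    fix s1 s2 assume s: "s1 \<in> Cx c1" "s2 \<in> Cx c1" "phi s1 = phi s2" "s1 \<noteq> s2"
    define c where "c = phi s1"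
    have pc: "c \<in> Cx v" "c \<noteq> c1" "E s1 c" "E s2 c" using phi[OF s(1)] phi[OF s(2)] s(3) c_def unfolding P_def by auto
    have s1': "dd x s1 + 1 = dd x c1" "E c1 s1" using Cx_D s(1) by auto
    have s2': "dd x s2 + 1 = dd x c1" "E c1 s2" using Cx_D s(2) by auto
    have sub: "{v, s1, s2} \<subseteq> Nb c1 \<inter> Nb c" using pc s1' s2' Cx_D c(1) Esym Nb_mem by auto
    have "v \<noteq> s1" "v \<noteq> s2" using s1' s2' c1 by auto
    then have "card {v, s1, s2} = 3" using s(4) by simp
    then show False using cle2[OF c1(1) _ pc(2)[symmetric] sub] Cx_D pc(1) by auto
  qed
  have sub: "phi ` Cx c1 \<subseteq> Cx v - {c1}" using phi unfolding P_def by blast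
  have "phi ` Cx c1 = Cx v - {c1}"
  proof (rule card_seteq[OF _ sub])
    show "finite (Cx v - {c1})" using finCx by simp
    have "card (Cx v - {c1}) = dd x v - 1" using F2[OF vV] c(1) finCx by simp
    moreover have "card (phi ` Cx c1) = dd x c1" using card_image[OF inj] F2[OF c1(1)] by simp
    ultimately show "card (Cx v - {c1}) \<le> card (phi ` Cx c1)" using c1 by simp
  qed
  then obtain s where s: "s \<in> Cx c1" "c2 = phi s" using c by blast
  then have "E s c2" using phi unfolding P_def by blast
  moreover have "dd x s + 1 = dd x c1" using Cx_D s(1) by blast
  ultimately have "s \<in> Cx c2" using Cx_I Esym c1 c2 by auto
  then show ?thesis using s by blast
qed

definition "f v = {w \<in> Nb x. dd w v < dd x v}"

lemma f_sub: "f v \<subseteq> Nb x" unfolding f_def by auto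
lemma finf: "finite (f v)" using finite_subset[OF f_sub finNb] .
lemma f_x: "f x = {}" unfolding f_def using d_0[OF xV] by auto

lemma f1: assumes "v \<in> V" "dd x v = 1" shows "f v = {v}"
proof
  show "f v \<subseteq> {v}"
  proof
    fix w assume "w \<in> f v"
    then have "w \<in> V" "dd w v = 0" unfolding f_def using assms Nb_sub by auto
    then show "w \<in> {v}" using d_0D assms by blast
  qed
  have "E x v" using d_1E xV assms by blast
  then show "{v} \<subseteq> f v" unfolding f_def using d_0 assms Nb_mem by auto
qed

lemma f_mono: assumes "c \<in> Cx v" shows "f c \<subseteq> f v"
proof
  fix w assume w: "w \<in> f c"
  have c: "c \<in> V" "E v c" "dd x c + 1 = dd x v" using Cx_D assms by auto
  have wV: "w \<in> V" using w f_sub Nb_sub by blast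
  have "dd w v \<le> dd w c + 1" using d_step[OF wV Esym[OF c(2)]] .
  moreover have "dd w c < dd x c" using w unfolding f_def by auto
  ultimately show "w \<in> f v" using w c unfolding f_def by auto
qed

lemma f_cover:
  assumes vV: "v \<in> V" and i: "dd x v \<ge> 2" and w: "w \<in> f v"
  shows "\<exists>c\<in>Cx v. w \<in> f c"
proof -
  have wx: "E x w" "dd w v < dd x v" using w unfolding f_def using Nb_mem by auto
  have wV: "w \<in> V" using EV2 wx by blast
  have "dd w v \<noteq> 0"
  proof
    assume "dd w v = 0" then have "w = v" using d_0D wV vV by blast
    then show False using d_adj[OF wx(1)] i by simp
  qed
  then obtain n where n: "dd w v = Suc n" by (cases "dd w v") auto
  obtain c where c: "E c v" "dd w c = n" using d_pred[OF wV vV n] by blast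
  have cV: "c \<in> V" using EV1 c by blast
  have "dd x c \<le> dd x w + dd w c" using d_tri xV wV cV by blast
  then have "dd x c \<le> 1 + n" using d_adj[OF wx(1)] c by simp
  moreover have "dd x c + 1 = dd x v \<or> dd x c = dd x v + 1" using F1[OF Esym[OF c(1)]] .
  ultimately have dc: "dd x c + 1 = dd x v" using wx n by auto
  then have "c \<in> Cx v" using Cx_I Esym c by blast
  moreover have "w \<in> f c" unfolding f_def using wx Nb_mem dc c n by auto
  ultimately show ?thesis by blast
qed

definition "Lay i \<longleftrightarrow> (\<forall>v\<in>V. dd x v = i \<longrightarrow> card (f v) = i \<and> (\<forall>a\<in>f v. \<exists>c\<in>Cx v. f c = f v - {a}))"
definition "Inj i \<longleftrightarrow> (\<forall>v1\<in>V. \<forall>v2\<in>V. dd x v1 = i \<longrightarrow> dd x v2 = i \<longrightarrow> f v1 = f v2 \<longrightarrow> v1 = v2)"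

lemma step_lay:
  assumes i2: "i \<ge> 2" and IH: "\<And>j. j < i \<Longrightarrow> Lay j \<and> Inj j"
    and vV: "v \<in> V" and dv: "dd x v = i"
  shows "card (f v) = i \<and> (\<forall>a\<in>f v. \<exists>c\<in>Cx v. f c = f v - {a})"
proof -
  have L1: "Lay (i - 1)" "Inj (i - 1)" "Lay (i - 2)" "Inj (i - 2)" using IH i2 by auto
  have cC: "card (Cx v) = i" using F2[OF vV] dv by simp
  have cD: "\<And>c. c \<in> Cx v \<Longrightarrow> c \<in> V \<and> dd x c = i - 1 \<and> E v c" using Cx_D dv by fastforce
  have cf: "\<And>c. c \<in> Cx v \<Longrightarrow> card (f c) = i - 1" using L1(1) cD unfolding Lay_def by blast
  have cinj: "\<And>c c'. c \<in> Cx v \<Longrightarrow> c' \<in> Cx v \<Longrightarrow> f c = f c' \<Longrightarrow> c = c'"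
    using L1(2) cD unfolding Inj_def by metis
  have sD: "\<And>c s. c \<in> Cx v \<Longrightarrow> s \<in> Cx c \<Longrightarrow> s \<in> V \<and> dd x s = i - 2 \<and> E c s"
    using Cx_D cD by fastforce
  have sf: "\<And>c s. c \<in> Cx v \<Longrightarrow> s \<in> Cx c \<Longrightarrow> card (f s) = i - 2"
    using L1(3) sD unfolding Lay_def by blast
  have sinj: "\<And>c c' s s'. c \<in> Cx v \<Longrightarrow> s \<in> Cx c \<Longrightarrow> c' \<in> Cx v \<Longrightarrow> s' \<in> Cx c' \<Longrightarrow> f s = f s' \<Longrightarrow> s = s'"
    using L1(4) sD unfolding Inj_def by metis
  have "Cx v \<noteq> {}" using cC i2 by auto
  then obtain c1 where c1: "c1 \<in> Cx v" by blast
  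
  have PI: "\<And>c c'. c \<in> Cx v \<Longrightarrow> c' \<in> Cx v \<Longrightarrow> c \<noteq> c' \<Longrightarrow>
      \<exists>s. s \<in> Cx c \<and> s \<in> Cx c' \<and> f s = f c \<inter> f c' \<and> card (f c \<inter> f c') = i - 2"
  proof -
    fix c c' assume cc: "c \<in> Cx v" "c' \<in> Cx v" "c \<noteq> c'"
    obtain s where s: "s \<in> Cx c" "s \<in> Cx c'" using Sq[OF vV cc] by blast
    have sub: "f s \<subseteq> f c \<inter> f c'" using f_mono s by blast
    have ne: "f c \<inter> f c' \<noteq> f c"
    proof
      assume "f c \<inter> f c' = f c"
      then have "f c \<subseteq> f c'" by blast
      then have "f c = f c'" using card_seteq[OF finf] cf cc by (metis order_refl)
      then show False using cinj cc by blast
    qed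
    have "card (f c \<inter> f c') < card (f c)"
      using ne by (intro psubset_card_mono finf) blast
    then have "card (f c \<inter> f c') \<le> i - 2" using cf cc by simp
    moreover have "card (f s) \<le> card (f c \<inter> f c')" using card_mono[OF _ sub] finf by blast
    ultimately have cs: "card (f c \<inter> f c') = i - 2" using sf[OF cc(1) s(1)] by simp
    have "f s = f c \<inter> f c'" using card_seteq[OF _ sub] finf cs sf[OF cc(1) s(1)] by (metis finite_Int order_refl)
    then show "\<exists>s. s \<in> Cx c \<and> s \<in> Cx c' \<and> f s = f c \<inter> f c' \<and> card (f c \<inter> f c') = i - 2"
      using s cs by blast
  qed
  define a where "a c = the_elem (f c1 - f c)" for c
  define e where "e c = the_elem (f c - f c1)" for c
  have AE: "\<And>c. c \<in> Cx v - {c1} \<Longrightarrow> a c \<in> f c1 \<and> a c \<notin> f c \<and> e c \<in> f c \<and> e c \<notin> f c1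
      \<and> f c = insert (e c) (f c1 - {a c}) \<and> f c1 \<inter> f c = f c1 - {a c}"
  proof -
    fix c assume c: "c \<in> Cx v - {c1}"
    have ci: "card (f c1 \<inter> f c) = i - 2" using PI[OF c1, of c] c by auto
    have "card (f c1 - f c) = card (f c1) - card (f c1 \<inter> f c)"
      by (rule card_Diff_subset_Int) (simp add: finf)
    then have "card (f c1 - f c) = 1" using ci cf c1 i2 by simp
    then obtain q where "f c1 - f c = {q}" by (rule card_1_singletonE)
    then have A1: "f c1 - f c = {a c}" unfolding a_def by simp
    have "card (f c - f c1) = card (f c) - card (f c \<inter> f c1)"
      by (rule card_Diff_subset_Int) (simp add: finf)
    then have "card (f c - f c1) = 1" using ci cf c i2 by (simp add: Int_commute)
    then obtain q' where "f c - f c1 = {q'}" by (rule card_1_singletonE)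
    then have E1: "f c - f c1 = {e c}" unfolding e_def by simp
    have X1: "f c = insert (e c) (f c1 - {a c})" using A1 E1 by blast
    have X2: "f c1 \<inter> f c = f c1 - {a c}" using A1 by blast
    have X3: "a c \<in> f c1" "a c \<notin> f c" using A1 by auto
    have X4: "e c \<in> f c" "e c \<notin> f c1" using E1 by auto
    show "a c \<in> f c1 \<and> a c \<notin> f c \<and> e c \<in> f c \<and> e c \<notin> f c1
      \<and> f c = insert (e c) (f c1 - {a c}) \<and> f c1 \<inter> f c = f c1 - {a c}"
      using X1 X2 X3 X4 by (intro conjI)
  qed
  have ainj: "inj_on a (Cx v - {c1})"
  proof (rule inj_onI, rule ccontr)
    fix c c' assume cc: "c \<in> Cx v - {c1}" "c' \<in> Cx v - {c1}" "a c = a c'" "c \<noteq> c'"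
    obtain s where s: "s \<in> Cx c1" "s \<in> Cx c" "f s = f c1 \<inter> f c" using PI[OF c1, of c] cc by auto
    obtain s' where s': "s' \<in> Cx c1" "s' \<in> Cx c'" "f s' = f c1 \<inter> f c'" using PI[OF c1, of c'] cc by auto
    have "f s = f s'" using s s' AE[OF cc(1)] AE[OF cc(2)] cc(3) by simp
    then have "s = s'" using sinj[OF c1 s(1) c1 s'(1)] by blast
    have sub: "{c1, c, c'} \<subseteq> Nb s \<inter> Nb v"
      using sD[OF c1 s(1)] sD[OF _ s(2)] sD[OF _ s'(2)] \<open>s = s'\<close> cc c1 cD Esym Nb_mem by auto
    have "card {c1, c, c'} = 3" using cc by auto
    moreover have "s \<noteq> v" using sD[OF c1 s(1)] dv i2 by auto
    ultimately show False using cle2[OF _ vV _ sub] sD[OF c1 s(1)] by auto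
  qed
  have aimg: "a ` (Cx v - {c1}) = f c1"
  proof (rule card_seteq[OF finf])
    show "a ` (Cx v - {c1}) \<subseteq> f c1" using AE by blast
    show "card (f c1) \<le> card (a ` (Cx v - {c1}))"
      using card_image[OF ainj] cC cf[OF c1] c1 finCx by simp
  qed
  have econst: "\<And>c c'. c \<in> Cx v - {c1} \<Longrightarrow> c' \<in> Cx v - {c1} \<Longrightarrow> e c = e c'"
  proof (rule ccontr)
    fix c c' assume cc: "c \<in> Cx v - {c1}" "c' \<in> Cx v - {c1}" "e c \<noteq> e c'"
    then have ncc: "c \<noteq> c'" by blast
    have aa: "a c \<noteq> a c'" using ainj cc ncc unfolding inj_on_def by blast
    have sub: "f c \<inter> f c' \<subseteq> f c1 - {a c, a c'}"
    proof
      fix w assume w: "w \<in> f c \<inter> f c'"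
      have f1: "f c = insert (e c) (f c1 - {a c})" "e c \<notin> f c1" using AE[OF cc(1)] by blast+
      have f2: "f c' = insert (e c') (f c1 - {a c'})" "e c' \<notin> f c1" using AE[OF cc(2)] by blast+
      have "w \<noteq> e c"
      proof
        assume "w = e c" then have "e c \<in> f c'" using w by blast
        then show False using f2 f1(2) cc(3) by auto
      qed
      then have w1: "w \<in> f c1 - {a c}" using w f1(1) by auto
      have "w \<noteq> e c'"
      proof
        assume "w = e c'" then have "e c' \<in> f c" using w by blast
        then show False using f1 f2(2) cc(3) by auto
      qed
      then have w2: "w \<in> f c1 - {a c'}" using w f2(1) by auto
      show "w \<in> f c1 - {a c, a c'}" using w1 w2 by auto
    qed
    have "card (f c1 - {a c, a c'}) = i - 3" using AE[OF cc(1)] AE[OF cc(2)] aa cf[OF c1] finf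
      by (simp add: card_Diff_subset)
    moreover have "card (f c \<inter> f c') = i - 2" using PI cc ncc by blast
    moreover have "card (f c \<inter> f c') \<le> card (f c1 - {a c, a c'})" using card_mono[OF _ sub] finf by blast
    moreover have "i \<ge> 3"
    proof -
      have "{c, c'} \<subseteq> Cx v - {c1}" using cc by blast
      then have "card {c, c'} \<le> card (Cx v - {c1})" using card_mono finCx by (metis finite_Diff)
      then show ?thesis using ncc cC c1 finCx by simp
    qed
    ultimately show False by simp
  qed
  have "card (Cx v - {c1}) \<ge> 1" using cC c1 finCx i2 by simp
  then obtain c2 where c2: "c2 \<in> Cx v - {c1}" by (metis card_0_eq ex_in_conv finCx finite_Diff not_one_le_zero)
  define e0 where "e0 = e c2"
  have fv: "f v = insert e0 (f c1)"
  proof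
    show "insert e0 (f c1) \<subseteq> f v" using f_mono[OF c1] f_mono[of c2 v] c2 AE[OF c2] e0_def by blast
    show "f v \<subseteq> insert e0 (f c1)"
    proof
      fix w assume "w \<in> f v"
      then obtain c where c: "c \<in> Cx v" "w \<in> f c" using f_cover[OF vV] dv i2 by blast
      show "w \<in> insert e0 (f c1)"
      proof (cases "c = c1")
        case False
        then have cc: "c \<in> Cx v - {c1}" using c by blast
        then have "f c = insert (e c) (f c1 - {a c})" using AE[OF cc] by blast
        moreover have "e c = e0" using econst[OF cc c2] e0_def by simp
        ultimately show ?thesis using c(2) by auto
      qed (use c in blast)
    qed
  qed
  have e0n: "e0 \<notin> f c1" using AE[OF c2] e0_def by blast
  have cardfv: "card (f v) = i" using fv e0n finf cf[OF c1] i2 by simp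
  have B: "\<forall>b\<in>f v. \<exists>c\<in>Cx v. f c = f v - {b}"
  proof
    fix b assume b: "b \<in> f v"
    show "\<exists>c\<in>Cx v. f c = f v - {b}"
    proof (cases "b = e0")
      case True then show ?thesis using fv e0n c1 by auto
    next
      case False
      then have "b \<in> f c1" using b fv by blast
      then have "b \<in> a ` (Cx v - {c1})" using aimg by simp
      then obtain c where c: "c \<in> Cx v - {c1}" "a c = b" by (rule imageE) simp
      have X: "f c = insert (e c) (f c1 - {a c})" using AE[OF c(1)] by blast
      have "e c = e0" using econst[OF c(1) c2] e0_def by simp
      then have "f c = insert e0 (f c1 - {b})" using X c(2) by simp
      then have "f c = f v - {b}" using fv False by auto
      then show ?thesis using c by blast
    qed
  qed
  from cardfv B show ?thesis by (rule conjI)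
qed

lemma step_inj:
  assumes i2: "i \<ge> 2" and LI: "Lay i" and IJ: "Inj (i - 1)"
    and v: "v1 \<in> V" "v2 \<in> V" "dd x v1 = i" "dd x v2 = i" and eq: "f v1 = f v2"
  shows "v1 = v2"
proof (rule ccontr)
  assume ne: "v1 \<noteq> v2"
  have L1: "card (f v1) = i" "\<And>b. b \<in> f v1 \<Longrightarrow> \<exists>c\<in>Cx v1. f c = f v1 - {b}"
    using LI v unfolding Lay_def by auto
  have L2: "\<And>b. b \<in> f v2 \<Longrightarrow> \<exists>c\<in>Cx v2. f c = f v2 - {b}"
    using LI v unfolding Lay_def by auto
  obtain b1 b2 where b: "b1 \<in> f v1" "b2 \<in> f v1" "b1 \<noteq> b2"
  proof -
    have "card (f v1) \<ge> 2" using L1 i2 by simp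
    then show ?thesis using that finf
      by (metis One_nat_def card_le_Suc0_iff_eq not_less_eq_eq numeral_2_eq_2)
  qed
  have common: "\<And>b. b \<in> f v1 \<Longrightarrow> \<exists>c. c \<in> Cx v1 \<and> c \<in> Cx v2 \<and> f c = f v1 - {b}"
  proof -
    fix b assume bb: "b \<in> f v1"
    obtain c where c: "c \<in> Cx v1" "f c = f v1 - {b}" using L1(2)[OF bb] by blast
    obtain c' where c': "c' \<in> Cx v2" "f c' = f v2 - {b}" using L2 bb eq by blast
    have "c \<in> V" "dd x c = i - 1" using Cx_D[OF c(1)] v by auto
    moreover have "c' \<in> V" "dd x c' = i - 1" using Cx_D[OF c'(1)] v by auto
    ultimately have "c = c'" using IJ c(2) c'(2) eq unfolding Inj_def by metis
    then show "\<exists>c. c \<in> Cx v1 \<and> c \<in> Cx v2 \<and> f c = f v1 - {b}" using c c' by blast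
  qed
  obtain c where c: "c \<in> Cx v1" "c \<in> Cx v2" "f c = f v1 - {b1}" using common[OF b(1)] by blast
  obtain d where d: "d \<in> Cx v1" "d \<in> Cx v2" "f d = f v1 - {b2}" using common[OF b(2)] by blast
  have cd: "c \<noteq> d"
  proof
    assume "c = d"
    then have "f v1 - {b1} = f v1 - {b2}" using c d by simp
    then show False using b by blast
  qed
  obtain s where s: "s \<in> Cx c" "s \<in> Cx d" using Sq[OF v(1) c(1) d(1) cd] by blast
  have sub: "{v1, v2, s} \<subseteq> Nb c \<inter> Nb d"
    using Cx_D[OF c(1)] Cx_D[OF c(2)] Cx_D[OF d(1)] Cx_D[OF d(2)] Cx_D[OF s(1)] Cx_D[OF s(2)] Esym Nb_mem
    by auto
  have "s \<noteq> v1" "s \<noteq> v2" using Cx_D[OF s(1)] Cx_D[OF c(1)] v by auto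
  then have "card {v1, v2, s} = 3" using ne by simp
  then show False using cle2[OF _ _ cd sub] Cx_D[OF c(1)] Cx_D[OF d(1)] by auto
qed

lemma LayInj: "Lay i \<and> Inj i"
proof (induction i rule: less_induct)
  case (less i)
  show ?case
  proof (cases "i \<ge> 2")
    case True
    have LI: "Lay i" unfolding Lay_def using step_lay[OF True less.IH] by blast
    have IJ: "Inj (i - 1)" using less.IH True by simp
    have "Inj i" unfolding Inj_def using step_inj[OF True LI IJ] by blast
    then show ?thesis using LI by blast
  next
    case False
    then consider "i = 0" | "i = 1" by linarith
    then show ?thesis
    proof cases
      case 1
      have X: "\<And>v. v \<in> V \<Longrightarrow> dd x v = 0 \<Longrightarrow> v = x" using d_0D xV by metis
      have Y: "\<And>v. v \<in> V \<Longrightarrow> dd x v = 0 \<Longrightarrow> f v = {}" using X f_x by blast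
      show ?thesis unfolding Lay_def Inj_def using X Y 1 by auto
    next
      case 2
      have L: "Lay i" unfolding Lay_def
      proof (intro ballI impI)
        fix v assume v: "v \<in> V" "dd x v = i"
        then have fv: "f v = {v}" using f1 2 by simp
        then have C1: "card (f v) = i" using 2 by simp
        have "\<forall>a\<in>f v. \<exists>c\<in>Cx v. f c = f v - {a}"
        proof
          fix a assume "a \<in> f v"
          then have "a = v" using fv by simp
          moreover have "x \<in> Cx v" using Cx_I d_1E[OF xV v(1)] v 2 Esym d_0[OF xV] by auto
          ultimately show "\<exists>c\<in>Cx v. f c = f v - {a}" using f_x fv by auto
        qed
        then show "card (f v) = i \<and> (\<forall>a\<in>f v. \<exists>c\<in>Cx v. f c = f v - {a})" using C1 by blast
      qed
      have "Inj i" unfolding Inj_def using f1 2 by auto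
      then show ?thesis using L by blast
    qed
  qed
qed

lemma f_inj: "v1 \<in> V \<Longrightarrow> v2 \<in> V \<Longrightarrow> f v1 = f v2 \<Longrightarrow> v1 = v2"
proof -
  assume v: "v1 \<in> V" "v2 \<in> V" "f v1 = f v2"
  have "card (f v1) = dd x v1" "card (f v2) = dd x v2"
    using LayInj[of "dd x v1"] LayInj[of "dd x v2"] v unfolding Lay_def by auto
  then have "dd x v1 = dd x v2" using v by simp
  then show "v1 = v2" using LayInj[of "dd x v1"] v unfolding Inj_def by auto
qed

lemma f_down: "v \<in> V \<Longrightarrow> b \<in> f v \<Longrightarrow> \<exists>c\<in>Cx v. f c = f v - {b}"
  using LayInj[of "dd x v"] unfolding Lay_def by auto

lemma f_card: "v \<in> V \<Longrightarrow> card (f v) = dd x v"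
  using LayInj[of "dd x v"] unfolding Lay_def by auto

end



context ap begin

lemma f_z: "f z = Nb x"
  using card_seteq[OF finNb f_sub] f_card[OF zV] dxz cardNb[OF xV] kis5 by simp

lemma f_surj_aux: "\<forall>v\<in>V. S \<subseteq> f v \<longrightarrow> card (f v - S) = n \<longrightarrow> (\<exists>u\<in>V. f u = S)"
proof (induction n)
  case 0
  show ?case
  proof (intro ballI impI)
    fix v assume "v \<in> V" "S \<subseteq> f v" "card (f v - S) = 0"
    then have "f v = S" using finf by auto
    then show "\<exists>u\<in>V. f u = S" using \<open>v \<in> V\<close> by blast
  qed
next
  case (Suc n)
  show ?case
  proof (intro ballI impI)
    fix v assume v: "v \<in> V" "S \<subseteq> f v" "card (f v - S) = Suc n"
    then obtain b where b: "b \<in> f v - S" by (metis card_0_eq empty_iff ex_in_conv finf finite_Diff nat.distinct(1))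
    obtain c where c: "c \<in> Cx v" "f c = f v - {b}" using f_down[OF v(1)] b by blast
    have "S \<subseteq> f c" using c v b by blast
    moreover have "f c - S = (f v - S) - {b}" using c by blast
    then have "card (f c - S) = n" using v b finf by simp
    moreover have "c \<in> V" using Cx_D c by blast
    ultimately show "\<exists>u\<in>V. f u = S" using Suc.IH by blast
  qed
qed

lemma f_surj: "S \<subseteq> Nb x \<Longrightarrow> \<exists>u\<in>V. f u = S"
  using f_surj_aux zV f_z by blast

lemma f_adj:
  assumes v: "v1 \<in> V" "v2 \<in> V"
  shows "E v1 v2 \<longleftrightarrow> card ((f v1 - f v2) \<union> (f v2 - f v1)) = 1"
proof
  have gen: "\<And>a b. a \<in> V \<Longrightarrow> b \<in> Cx a \<Longrightarrow> card ((f a - f b) \<union> (f b - f a)) = 1"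
  proof -
    fix a b assume a: "a \<in> V" and b: "b \<in> Cx a"
    have bV: "b \<in> V" "dd x b + 1 = dd x a" using Cx_D b by auto
    have sub: "f b \<subseteq> f a" using f_mono b by blast
    then have "(f a - f b) \<union> (f b - f a) = f a - f b" by blast
    moreover have "card (f a - f b) = card (f a) - card (f b)" using card_Diff_subset[OF finf sub] .
    ultimately show "card ((f a - f b) \<union> (f b - f a)) = 1" using f_card a bV by simp
  qed
  assume e: "E v1 v2"
  show "card ((f v1 - f v2) \<union> (f v2 - f v1)) = 1"
  proof (cases "dd x v2 + 1 = dd x v1")
    case True
    then have "v2 \<in> Cx v1" using Cx_I e by blast
    then show ?thesis using gen v by blast
  next
    case False
    then have "dd x v1 + 1 = dd x v2" using F1[OF e] by simp
    then have "v1 \<in> Cx v2" using Cx_I Esym[OF e] by blast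
    then show ?thesis using gen[of v2 v1] v by (simp add: Un_commute)
  qed
next
  have gen: "\<And>a b q. a \<in> V \<Longrightarrow> b \<in> V \<Longrightarrow> (f a - f b) \<union> (f b - f a) = {q} \<Longrightarrow> q \<in> f a \<Longrightarrow> E a b"
  proof -
    fix a b q assume a: "a \<in> V" "b \<in> V" "(f a - f b) \<union> (f b - f a) = {q}" "q \<in> f a"
    then have "f b = f a - {q}" by blast
    then obtain c where c: "c \<in> Cx a" "f c = f b" using f_down[OF a(1) a(4)] by auto
    then have "c = b" using f_inj Cx_D a by blast
    then show "E a b" using Cx_D c by blast
  qed
  assume "card ((f v1 - f v2) \<union> (f v2 - f v1)) = 1"
  then obtain q where q: "(f v1 - f v2) \<union> (f v2 - f v1) = {q}" by (rule card_1_singletonE)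
  then have "q \<in> f v1 \<or> q \<in> f v2" by blast
  then show "E v1 v2"
  proof
    assume "q \<in> f v1" then show ?thesis using gen[OF v(1) v(2) q] by blast
  next
    assume "q \<in> f v2" then have "E v2 v1" using gen[OF v(2) v(1) _ \<open>q \<in> f v2\<close>] q by (simp add: Un_commute)
    then show ?thesis using Esym by blast
  qed
qed

lemma iso: "graph_iso_cube V E 5"
proof -
  have "card (Nb x) = card {..<(5::nat)}" using cardNb[OF xV] kis5 by simp
  then obtain h where h: "bij_betw h (Nb x) {..<5::nat}" using finite_same_card_bij finNb by blast
  have hinj: "inj_on h (Nb x)" and himg: "h ` Nb x = {..<5}" using h by (simp_all add: bij_betw_def)
  define F where "F v = h ` f v" for v
  have img_eq: "\<And>P Q. P \<subseteq> Nb x \<Longrightarrow> Q \<subseteq> Nb x \<Longrightarrow> h ` P = h ` Q \<longleftrightarrow> P = Q"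
    using hinj by (meson inj_on_image_eq_iff)
  have bij: "bij_betw F V (Pow {..<5})"
    unfolding bij_betw_def
  proof
    show "inj_on F V"
    proof (rule inj_onI)
      fix v1 v2 assume "v1 \<in> V" "v2 \<in> V" "F v1 = F v2"
      then have "h ` f v1 = h ` f v2" unfolding F_def by simp
      then have "f v1 = f v2" using img_eq[OF f_sub f_sub] by simp
      then show "v1 = v2" using f_inj \<open>v1 \<in> V\<close> \<open>v2 \<in> V\<close> by blast
    qed
    show "F ` V = Pow {..<5}"
    proof
      show "F ` V \<subseteq> Pow {..<5}"
      proof
        fix T assume "T \<in> F ` V"
        then obtain v where "T = h ` f v" unfolding F_def by auto
        then have "T \<subseteq> h ` Nb x" using f_sub by auto
        then show "T \<in> Pow {..<5}" using himg by simp
      qed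
      show "Pow {..<5} \<subseteq> F ` V"
      proof
        fix T assume "T \<in> Pow {..<(5::nat)}"
        then have T: "T \<subseteq> h ` Nb x" using himg by simp
        define S where "S = Nb x \<inter> h -` T"
        have "h ` S = T"
        proof
          show "h ` S \<subseteq> T" unfolding S_def by auto
          show "T \<subseteq> h ` S"
          proof
            fix t assume "t \<in> T"
            then obtain w where "w \<in> Nb x" "t = h w" using T by auto
            then show "t \<in> h ` S" unfolding S_def using \<open>t \<in> T\<close> by auto
          qed
        qed
        moreover have "S \<subseteq> Nb x" unfolding S_def by (rule Int_lower1)
        then obtain u where "u \<in> V" "f u = S" using f_surj by blast
        ultimately show "T \<in> F ` V" unfolding F_def by (metis image_eqI)
      qed
    qed
  qed
  have adj: "\<forall>v1\<in>V. \<forall>v2\<in>V. E v1 v2 \<longleftrightarrow> cube_adj (F v1) (F v2)"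
  proof (intro ballI)
    fix v1 v2 assume v: "v1 \<in> V" "v2 \<in> V"
    have s1: "f v1 \<subseteq> Nb x" "f v2 \<subseteq> Nb x" using f_sub by auto
    have q1: "f v1 - f v2 \<subseteq> Nb x" using s1 by auto
    have q2: "f v2 - f v1 \<subseteq> Nb x" using s1 by auto
    have d1: "h ` f v1 - h ` f v2 = h ` (f v1 - f v2)"
      using inj_on_image_set_diff[OF hinj q1 s1(2)] by simp
    have d2: "h ` f v2 - h ` f v1 = h ` (f v2 - f v1)"
      using inj_on_image_set_diff[OF hinj q2 s1(1)] by simp
    have X: "(F v1 - F v2) \<union> (F v2 - F v1) = h ` ((f v1 - f v2) \<union> (f v2 - f v1))"
      unfolding F_def using d1 d2 by (simp add: image_Un)
    have I: "inj_on h ((f v1 - f v2) \<union> (f v2 - f v1))"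
      by (rule inj_on_subset[OF hinj]) (use q1 q2 in blast)
    have "card ((F v1 - F v2) \<union> (F v2 - F v1)) = card ((f v1 - f v2) \<union> (f v2 - f v1))"
      unfolding X using card_image[OF I] .
    then show "E v1 v2 \<longleftrightarrow> cube_adj (F v1) (F v2)" unfolding cube_adj_def using f_adj[OF v] by simp
  qed
  show ?thesis unfolding graph_iso_cube_def cube_vertices_def by (intro exI[of _ F] conjI bij adj)
qed

end




theorem theorem3p5:
  fixes V :: "'a set" and E :: "'a \<Rightarrow> 'a \<Rightarrow> bool" and v k lam mu :: nat
  assumes "amply_regular V E v k lam mu"
    and "connected_graph V E"
    and "diameter V E = 5"
    and "odd k" and "k \<ge> 5"
    and "mu = (k - 1) div 2"
  shows "graph_iso_cube V E 5"
proof -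
  have kmu: "k = 2 * mu + 1" using assms(4,6) by presburger
  have mu2: "mu \<ge> 2" using assms(5,6) by simp
  interpret ag V E k lam mu
    using assms(1,2) kmu mu2 unfolding amply_regular_def by unfold_locales auto
  define D where "D = {gdist V E x y | x y. x \<in> V \<and> y \<in> V}"
  have D: "D = (\<lambda>(x, y). gdist V E x y) ` (V \<times> V)" unfolding D_def by auto
  have "V \<noteq> {}" using assms(2) unfolding connected_graph_def by blast
  then have "D \<noteq> {}" unfolding D by blast
  moreover have "finite D" unfolding D using finV by simp
  ultimately have "Max D \<in> D" using Max_in by blast
  moreover have "Max D = 5" using assms(3) unfolding diameter_def D_def .
  ultimately have "5 \<in> (\<lambda>(x, y). gdist V E x y) ` (V \<times> V)" using D by simp
  then obtain p where p: "p \<in> V \<times> V" "5 = (\<lambda>(x, y). gdist V E x y) p" by (rule imageE)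
  obtain x z where "p = (x, z)" by (cases p)
  then have xz: "x \<in> V" "z \<in> V" "gdist V E x z = 5" using p by auto
  interpret ap V E k lam mu x z using xz by unfold_locales auto
  show ?thesis by (rule iso)
qed

end
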